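(* Let $\mathcal D_2^S$ be the family of all successor expansions of finite 2-pointed directed graphs $(D,s,t)$. The directed reachability query, i.e. the class of structures in $\mathcal D_2^S$ in which there is a directed path from $s$ to $t$, is breadth-first traversal-invariant definable over $\mathcal D_2^S$.
   Context: A 2-pointed directed graph $(D,s,t)$ is a finite directed graph (binary relation $E$) with two distinguished vertices. A successor expansion of it is $(D,s,t,\min,\max,S)$ where $S$ is a unary function which is the successor function of some linear order of the vertex set with least element $\min$ and greatest element $\max$; its signature is denoted $(\Gamma_2,S)$. Graphs (as targets) are finite and undirected; $\Gamma_n$ is the signature with a binary relation symbol $E$ and $n$ constants; an $n$-pointed graph is a graph with $n$ distinguished vertices. A linear order $<$ of the vertex set of a graph, listing vertices $v_1<\dots<v_n$, is a breadth-first traversal (BFT) if for each $i\ge2$, whenever some $v_j$ with $j<i$ has a neighbour outside $\{v_1,\dots,v_{i-1}\}$, $v_i$ is adjacent to $v_{j^*}$ for the least such $j^*$ (a visiting order of breadth-first search). Equivalently: for all $u<v<w$, $uEw$ implies some $x<v$ with $x\le u$ has $xEv$. A $k$-ary interpretation $\pi:\Gamma_n\to K$ consists of a first-order $K$-formula $\partial^\pi(\bar x)$ in a $k$-tuple of variables, a $K$-formula $E^\pi(\bar x,\bar y)$, and for each constant a definition by cases (cases $K$-formulas, values $k$-tuples of $K$-terms); $A^\pi$ has domain $\{\bar a\in A^k:A\models\partial^\pi(\bar a)\}$ and symbols interpreted by their translations. $\pi$ is left total from $\mathcal K$ to $\mathcal G'$ if $A^\pi\in\mathcal G'$ for all $A\in\mathcal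 K$. For a family $\mathcal G'$ of finite $n$-pointed graphs let $\mathcal B$ be the family of expansions $(G,<)$ with $G\in\mathcal G'$ and $<$ a BFT of $G$. A $\Gamma_n\cup\{<\}$-sentence $\varphi$ is $(\mathcal G',\mathcal B)$-invariant if $(G,<)\models\varphi\iff(H,<')\models\varphi$ whenever $(G,<),(H,<')\in\mathcal B$ and $G\cong H$; then $G\models(\mathfrak B<)\varphi$ means $(G,<)\models\varphi$ for some (equivalently every) BFT. A query $Q$ (isomorphism-closed subfamily) over a family $\mathcal K$ of $K$-structures is basic BFT-invariant definable if there are $n$, a family $\mathcal G'$ of finite $n$-pointed graphs, a $(\mathcal G',\mathcal B)$-invariant sentence $\varphi$ and an interpretation $\pi:\Gamma_n\to K$ left total from $\mathcal K$ to $\mathcal G'$ with $A\in Q\iff A^\pi\models(\mathfrak B<)\varphi$ for all $A\in\mathcal K$; $Q$ is BFT-invariant definable if it is a boolean combination of such queries. *)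

theory Defs
  imports Main
begin

text \<open>Structures are taken over
  the carrier type nat (every finite structure has an isomorphic copy there).\<close>

record dstruct =
  dV :: "nat set"
  dE :: "(nat \<times> nat) set"
  ds :: nat
  dt :: nat
  dmin :: nat
  dmax :: nat
  dS :: "nat \<Rightarrow> nat"

definition lin_order :: "'v set \<Rightarrow> ('v \<times> 'v) set \<Rightarrow> bool" where
  "lin_order V L \<longleftrightarrow> L \<subseteq> V \<times> V \<and> strict_linear_order_on V L"

definition is_successor_of :: "nat set \<Rightarrow> (nat \<times> nat) set \<Rightarrow> nat \<Rightarrow> nat \<Rightarrow> (nat \<Rightarrow> nat) \<Rightarrow> bool" where
  "is_successor_of V L mn mx S \<longleftrightarrow>
     lin_order V L \<and> mn \<in> V \<and> mx \<in> V \<and>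
     (\<forall>v\<in>V. v \<noteq> mn \<longrightarrow> (mn, v) \<in> L) \<and>
     (\<forall>v\<in>V. v \<noteq> mx \<longrightarrow> (v, mx) \<in> L) \<and>
     (\<forall>v\<in>V. v \<noteq> mx \<longrightarrow> (v, S v) \<in> L \<and> \<not> (\<exists>w. (v, w) \<in> L \<and> (w, S v) \<in> L)) \<and>
     S mx = mx"

definition D2S :: "dstruct set" where
  "D2S = {A. finite (dV A) \<and> dE A \<subseteq> dV A \<times> dV A \<and> ds A \<in> dV A \<and> dt A \<in> dV A \<and>
             (\<exists>L. is_successor_of (dV A) L (dmin A) (dmax A) (dS A))}"

definition reach_query :: "dstruct set" where
  "reach_query = {A \<in> D2S. (ds A, dt A) \<in> (dE A)\<^sup>*}"

datatype kterm = KVar nat | KCs | KCt | KCmin | KCmax | KSucc kterm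

datatype kfm = KEq kterm kterm | KRel kterm kterm | KNot kfm | KAnd kfm kfm | KEx nat kfm

fun kfv_t :: "kterm \<Rightarrow> nat set" where
  "kfv_t (KVar x) = {x}"
| "kfv_t (KSucc t) = kfv_t t"
| "kfv_t _ = {}"

fun kfv :: "kfm \<Rightarrow> nat set" where
  "kfv (KEq t u) = kfv_t t \<union> kfv_t u"
| "kfv (KRel t u) = kfv_t t \<union> kfv_t u"
| "kfv (KNot p) = kfv p"
| "kfv (KAnd p q) = kfv p \<union> kfv q"
| "kfv (KEx x p) = kfv p - {x}"

fun keval :: "dstruct \<Rightarrow> (nat \<Rightarrow> nat) \<Rightarrow> kterm \<Rightarrow> nat" where
  "keval A \<sigma> (KVar x) = \<sigma> x"
| "keval A \<sigma> KCs = ds A"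
| "keval A \<sigma> KCt = dt A"
| "keval A \<sigma> KCmin = dmin A"
| "keval A \<sigma> KCmax = dmax A"
| "keval A \<sigma> (KSucc t) = dS A (keval A \<sigma> t)"

fun ksat :: "dstruct \<Rightarrow> (nat \<Rightarrow> nat) \<Rightarrow> kfm \<Rightarrow> bool" where
  "ksat A \<sigma> (KEq t u) \<longleftrightarrow> keval A \<sigma> t = keval A \<sigma> u"
| "ksat A \<sigma> (KRel t u) \<longleftrightarrow> (keval A \<sigma> t, keval A \<sigma> u) \<in> dE A"
| "ksat A \<sigma> (KNot p) \<longleftrightarrow> \<not> ksat A \<sigma> p"
| "ksat A \<sigma> (KAnd p q) \<longleftrightarrow> ksat A \<sigma> p \<and> ksat A \<sigma> q"
| "ksat A \<sigma> (KEx x p) \<longleftrightarrow> (\<exists>a\<in>dV A. ksat A (\<sigma>(x := a)) p)"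

record 'v pgraph =
  gV :: "'v set"
  gE :: "('v \<times> 'v) set"
  gc :: "'v list"

definition npgraph :: "nat \<Rightarrow> 'v pgraph \<Rightarrow> bool" where
  "npgraph n G \<longleftrightarrow> finite (gV G) \<and> gE G \<subseteq> gV G \<times> gV G \<and> sym (gE G) \<and> irrefl (gE G) \<and>
     length (gc G) = n \<and> set (gc G) \<subseteq> gV G"

definition pg_iso :: "'v pgraph \<Rightarrow> 'v pgraph \<Rightarrow> bool" where
  "pg_iso G H \<longleftrightarrow> (\<exists>f. bij_betw f (gV G) (gV H) \<and>
      (\<forall>x\<in>gV G. \<forall>y\<in>gV G. (x, y) \<in> gE G \<longleftrightarrow> (f x, f y) \<in> gE H) \<and>
      gc H = map f (gc G))"

text \<open>Breadth-first traversal, following the definition by visiting order: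
  for each vertex v, if some vertex before v has a neighbour not before v,
  then v is adjacent to the least such vertex.\<close>
definition is_bft :: "'v pgraph \<Rightarrow> ('v \<times> 'v) set \<Rightarrow> bool" where
  "is_bft G L \<longleftrightarrow> lin_order (gV G) L \<and>
     (\<forall>v\<in>gV G. \<forall>u. (u, v) \<in> L \<and> (\<exists>w. (u, w) \<in> gE G \<and> (w, v) \<notin> L) \<and>
        (\<forall>u'. (u', u) \<in> L \<longrightarrow> \<not> (\<exists>w. (u', w) \<in> gE G \<and> (w, v) \<notin> L))
        \<longrightarrow> (u, v) \<in> gE G)"

datatype gterm = GVar nat | GConst nat

datatype gfm = GEq gterm gterm | GRel gterm gterm | GLess gterm gterm
  | GNot gfm | GAnd gfm gfm | GEx nat gfm

fun gfv_t :: "gterm \<Rightarrow> nat set" where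
  "gfv_t (GVar x) = {x}"
| "gfv_t (GConst i) = {}"

fun gconst_t :: "gterm \<Rightarrow> nat set" where
  "gconst_t (GVar x) = {}"
| "gconst_t (GConst i) = {i}"

fun gfv :: "gfm \<Rightarrow> nat set" where
  "gfv (GEq t u) = gfv_t t \<union> gfv_t u"
| "gfv (GRel t u) = gfv_t t \<union> gfv_t u"
| "gfv (GLess t u) = gfv_t t \<union> gfv_t u"
| "gfv (GNot p) = gfv p"
| "gfv (GAnd p q) = gfv p \<union> gfv q"
| "gfv (GEx x p) = gfv p - {x}"

fun gconsts :: "gfm \<Rightarrow> nat set" where
  "gconsts (GEq t u) = gconst_t t \<union> gconst_t u"
| "gconsts (GRel t u) = gconst_t t \<union> gconst_t u"
| "gconsts (GLess t u) = gconst_t t \<union> gconst_t u"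
| "gconsts (GNot p) = gconsts p"
| "gconsts (GAnd p q) = gconsts p \<union> gconsts q"
| "gconsts (GEx x p) = gconsts p"

definition gsentence :: "nat \<Rightarrow> gfm \<Rightarrow> bool" where
  "gsentence n \<phi> \<longleftrightarrow> gfv \<phi> = {} \<and> gconsts \<phi> \<subseteq> {..<n}"

fun geval :: "'v pgraph \<Rightarrow> (nat \<Rightarrow> 'v) \<Rightarrow> gterm \<Rightarrow> 'v" where
  "geval G \<sigma> (GVar x) = \<sigma> x"
| "geval G \<sigma> (GConst i) = gc G ! i"

fun gsat :: "'v pgraph \<Rightarrow> ('v \<times> 'v) set \<Rightarrow> (nat \<Rightarrow> 'v) \<Rightarrow> gfm \<Rightarrow> bool" where
  "gsat G L \<sigma> (GEq t u) \<longleftrightarrow> geval G \<sigma> t = geval G \<sigma> u"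
| "gsat G L \<sigma> (GRel t u) \<longleftrightarrow> (geval G \<sigma> t, geval G \<sigma> u) \<in> gE G"
| "gsat G L \<sigma> (GLess t u) \<longleftrightarrow> (geval G \<sigma> t, geval G \<sigma> u) \<in> L"
| "gsat G L \<sigma> (GNot p) \<longleftrightarrow> \<not> gsat G L \<sigma> p"
| "gsat G L \<sigma> (GAnd p q) \<longleftrightarrow> gsat G L \<sigma> p \<and> gsat G L \<sigma> q"
| "gsat G L \<sigma> (GEx x p) \<longleftrightarrow> (\<exists>a\<in>gV G. gsat G L (\<sigma>(x := a)) p)"

text \<open>(G,<) satisfies a sentence (the assignment is irrelevant for sentences)\<close>
definition gmodels :: "'v pgraph \<Rightarrow> ('v \<times> 'v) set \<Rightarrow> gfm \<Rightarrow> bool" where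
  "gmodels G L \<phi> \<longleftrightarrow> (\<forall>\<sigma>. gsat G L \<sigma> \<phi>)"

text \<open>A definition by cases: list of (case sentence, value k-tuple of closed terms),
  together with an "otherwise" value; the first case that holds determines the value.\<close>
record interp =
  ik :: nat
  idom :: kfm
  iedge :: kfm
  iconsts :: "(((kfm \<times> kterm list) list) \<times> kterm list) list"

definition closed_tuple :: "nat \<Rightarrow> kterm list \<Rightarrow> bool" where
  "closed_tuple k ts \<longleftrightarrow> length ts = k \<and> (\<forall>t\<in>set ts. kfv_t t = {})"

definition wf_interp :: "nat \<Rightarrow> interp \<Rightarrow> bool" where
  "wf_interp n \<pi> \<longleftrightarrow> kfv (idom \<pi>) \<subseteq> {..<ik \<pi>} \<and> kfv (iedge \<pi>) \<subseteq> {..<2 * ik \<pi>} \<and>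
     length (iconsts \<pi>) = n \<and>
     (\<forall>(cs, d)\<in>set (iconsts \<pi>). closed_tuple (ik \<pi>) d \<and>
        (\<forall>(c, ts)\<in>set cs. kfv c = {} \<and> closed_tuple (ik \<pi>) ts))"

definition tuple_assign :: "nat list \<Rightarrow> nat \<Rightarrow> nat" where
  "tuple_assign xs i = (if i < length xs then xs ! i else 0)"

fun eval_cases :: "dstruct \<Rightarrow> (kfm \<times> kterm list) list \<Rightarrow> kterm list \<Rightarrow> nat list" where
  "eval_cases A [] d = map (keval A (\<lambda>_. dmin A)) d"
| "eval_cases A ((c, ts) # cs) d =
     (if ksat A (\<lambda>_. dmin A) c then map (keval A (\<lambda>_. dmin A)) ts else eval_cases A cs d)"

definition interp_struct :: "interp \<Rightarrow> dstruct \<Rightarrow> nat list pgraph" where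
  "interp_struct \<pi> A =
    (let D = {xs. length xs = ik \<pi> \<and> set xs \<subseteq> dV A \<and> ksat A (tuple_assign xs) (idom \<pi>)} in
     \<lparr> gV = D,
       gE = {(xs, ys). xs \<in> D \<and> ys \<in> D \<and> ksat A (tuple_assign (xs @ ys)) (iedge \<pi>)},
       gc = map (\<lambda>(cs, d). eval_cases A cs d) (iconsts \<pi>) \<rparr>)"

definition bft_invariant :: "nat list pgraph set \<Rightarrow> gfm \<Rightarrow> bool" where
  "bft_invariant Gs \<phi> \<longleftrightarrow>
     (\<forall>G L H L'. G \<in> Gs \<and> is_bft G L \<and> H \<in> Gs \<and> is_bft H L' \<and> pg_iso G H
        \<longrightarrow> (gmodels G L \<phi> \<longleftrightarrow> gmodels H L' \<phi>))"

definition bft_models :: "'v pgraph \<Rightarrow> gfm \<Rightarrow> bool" where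
  "bft_models G \<phi> \<longleftrightarrow> (\<exists>L. is_bft G L \<and> gmodels G L \<phi>)"

definition basic_bft_definable :: "dstruct set \<Rightarrow> dstruct set \<Rightarrow> bool" where
  "basic_bft_definable K Q \<longleftrightarrow> Q \<subseteq> K \<and>
     (\<exists>n Gs \<phi> \<pi>. Gs \<subseteq> {G. npgraph n G} \<and> gsentence n \<phi> \<and> wf_interp n \<pi> \<and>
        bft_invariant Gs \<phi> \<and> (\<forall>A\<in>K. interp_struct \<pi> A \<in> Gs) \<and>
        (\<forall>A\<in>K. A \<in> Q \<longleftrightarrow> bft_models (interp_struct \<pi> A) \<phi>))"

inductive bft_definable :: "dstruct set \<Rightarrow> dstruct set \<Rightarrow> bool" for K where
  basic: "basic_bft_definable K Q \<Longrightarrow> bft_definable K Q"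
| compl: "bft_definable K Q \<Longrightarrow> bft_definable K (K - Q)"
| inter: "bft_definable K Q1 \<Longrightarrow> bft_definable K Q2 \<Longrightarrow> bft_definable K (Q1 \<inter> Q2)"

end

theory Submission
  imports Defs "HOL-Library.Transitive_Closure_Table"
begin


lemma lin_orderD:
  assumes "lin_order V L"
  shows "L \<subseteq> V \<times> V" "\<And>a b c. (a,b) \<in> L \<Longrightarrow> (b,c) \<in> L \<Longrightarrow> (a,c) \<in> L"
    "\<And>a. (a,a) \<notin> L" "\<And>a b. a \<in> V \<Longrightarrow> b \<in> V \<Longrightarrow> a \<noteq> b \<Longrightarrow> (a,b) \<in> L \<or> (b,a) \<in> L"
  using assms unfolding lin_order_def strict_linear_order_on_def total_on_def irrefl_on_def trans_def
  by blast+

lemma crossing: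
  assumes "(a,b) \<in> E\<^sup>*" "a \<in> P" "b \<notin> P"
  shows "\<exists>u\<in>P. \<exists>w. w \<notin> P \<and> (u,w) \<in> E"
  using assms by (induction rule: rtrancl_induct) auto

definition candv :: "('v \<times> 'v) set \<Rightarrow> ('v \<times> 'v) set \<Rightarrow> 'v \<Rightarrow> 'v \<Rightarrow> bool" where
  "candv E L x u \<longleftrightarrow> (u,x) \<in> L \<and> (\<exists>w. (u,w) \<in> E \<and> (w,x) \<notin> L)"

locale bfs =
  fixes V :: "'v set" and E :: "('v \<times> 'v) set" and L :: "('v \<times> 'v) set" and r :: 'v
  assumes finV: "finite V" and EV: "E \<subseteq> V \<times> V"
    and lin: "lin_order V L"
    and bft: "\<forall>v\<in>V. \<forall>u. (u, v) \<in> L \<and> (\<exists>w. (u, w) \<in> E \<and> (w, v) \<notin> L) \<and>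
        (\<forall>u'. (u', u) \<in> L \<longrightarrow> \<not> (\<exists>w. (u', w) \<in> E \<and> (w, v) \<notin> L))
        \<longrightarrow> (u, v) \<in> E"
    and rV: "r \<in> V" and rleast: "\<forall>x\<in>V. x \<noteq> r \<longrightarrow> (r,x) \<in> L"
    and conn: "\<forall>x\<in>V. (r,x) \<in> E\<^sup>*"
begin

lemmas LV = lin_orderD(1)[OF lin]
lemmas Ltr = lin_orderD(2)[OF lin]
lemmas Lirr = lin_orderD(3)[OF lin]
lemmas Ltot = lin_orderD(4)[OF lin]

definition d :: "'v \<Rightarrow> nat" where "d x = (LEAST n. (r,x) \<in> E ^^ n)"

lemma d_ex: "x \<in> V \<Longrightarrow> (r,x) \<in> E ^^ d x"
  unfolding d_def using conn rtrancl_power by (metis LeastI_ex)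

lemma d_le: "(r,x) \<in> E ^^ n \<Longrightarrow> d x \<le> n"
  unfolding d_def by (rule Least_le)

lemma d_r: "d r = 0"
  using d_le[of r 0] by simp

lemma d_edge: "x \<in> V \<Longrightarrow> (x,y) \<in> E \<Longrightarrow> d y \<le> d x + 1"
  using d_ex d_le relpow_Suc_I by (metis Suc_eq_plus1)

lemma d_parent:
  assumes "x \<in> V" "x \<noteq> r"
  shows "\<exists>y. (y,x) \<in> E \<and> d x = Suc (d y) \<and> y \<in> V"
proof -
  have ex: "(r,x) \<in> E ^^ d x" using d_ex assms by simp
  have "d x \<noteq> 0" using ex assms by (metis relpow_0_E)
  then obtain m where m: "d x = Suc m" by (cases "d x") auto
  then obtain y where y: "(r,y) \<in> E ^^ m" "(y,x) \<in> E" using ex by (metis relpow_Suc_E)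
  have yV: "y \<in> V" using y(2) EV by auto
  have "d y \<le> m" using d_le y(1) .
  moreover have "d x \<le> d y + 1" using d_edge yV y(2) .
  ultimately have "d y = m" using m by simp
  then show ?thesis using y yV m by auto
qed

lemma least_cand:
  assumes xV: "x \<in> V" and xr: "x \<noteq> r"
  shows "\<exists>u. candv E L x u \<and> (\<forall>u'. (u',u) \<in> L \<longrightarrow> \<not> candv E L x u')"
proof -
  have "\<exists>u\<in>{w. (w,x) \<in> L}. \<exists>w. w \<notin> {w. (w,x) \<in> L} \<and> (u,w) \<in> E"
    by (rule crossing[of r x E]) (use conn xV rleast xr Lirr in auto)
  then obtain u0 where u0: "candv E L x u0" unfolding candv_def by auto
  have finL: "finite L" using LV finV by (meson finite_SigmaI rev_finite_subset)
  have "trans L" using lin unfolding lin_order_def strict_linear_order_on_def by blast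
  then have "L\<^sup>+ = L" by (rule trancl_id)
  then have "acyclic L" using Lirr by (simp add: acyclic_def)
  then have wfL: "wf L" using finL finite_acyclic_wf by blast
  obtain u where "u \<in> {u. candv E L x u}" "\<And>y. (y,u) \<in> L \<Longrightarrow> y \<notin> {u. candv E L x u}"
    using wfE_min[OF wfL, of u0 "{u. candv E L x u}"] u0 by blast
  then show ?thesis by auto
qed

lemma mono_aux: "d y = n \<Longrightarrow> (x,y) \<in> L \<Longrightarrow> d x \<le> d y"
proof (induction n arbitrary: x y rule: less_induct)
  case (less n)
  have xV: "x \<in> V" and yV: "y \<in> V" using less.prems LV by auto
  have yr: "y \<noteq> r"
  proof
    assume "y = r"
    then have "(x,r) \<in> L" using less.prems by simp
    moreover have "x \<noteq> r" using Lirr \<open>(x,r) \<in> L\<close> by auto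
    ultimately have "(r,x) \<in> L" using rleast xV by blast
    then have "(x,x) \<in> L" using Ltr[OF \<open>(x,r) \<in> L\<close>] by blast
    then show False using Lirr by blast
  qed
  show ?case
  proof (cases "x = r")
    case True then show ?thesis using d_r by simp
  next
    case xr: False
    obtain y' where y': "(y',y) \<in> E" "d y = Suc (d y')" "y' \<in> V" using d_parent yV yr by blast
    have y'y: "(y',y) \<in> L"
    proof (rule ccontr)
      assume "(y',y) \<notin> L"
      moreover have "y' \<noteq> y" using y'(2) by auto
      ultimately have "(y,y') \<in> L" using Ltot y'(3) yV by blast
      moreover have "d y' < n" using less.prems(1) y'(2) by simp
      ultimately have "d y \<le> d y'" using less.IH[of "d y'" y' y] by simp
      then show False using y'(2) by simp
    qed
    obtain uy where uy: "candv E L y uy" "\<forall>u'. (u',uy) \<in> L \<longrightarrow> \<not> candv E L y u'"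
      using least_cand yV yr by blast
    have cy': "candv E L y y'" unfolding candv_def using y'y y'(1) Lirr by blast
    have uyV: "uy \<in> V" using uy(1) LV unfolding candv_def by auto
    have duy: "d uy \<le> d y'"
    proof (cases "uy = y'")
      case False
      have "(y',uy) \<notin> L" using uy(2) cy' by blast
      then have "(uy,y') \<in> L" using Ltot False uyV y'(3) by blast
      moreover have "d y' < n" using less.prems(1) y'(2) by simp
      ultimately show ?thesis using less.IH[of "d y'" y' uy] by simp
    qed simp
    obtain ux where ux: "candv E L x ux" "\<forall>u'. (u',ux) \<in> L \<longrightarrow> \<not> candv E L x u'"
      using least_cand xV xr by blast
    have uxV: "ux \<in> V" using ux(1) LV unfolding candv_def by auto
    have ux1: "(ux,x) \<in> L" "\<exists>w. (ux,w) \<in> E \<and> (w,x) \<notin> L" using ux(1) unfolding candv_def by auto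
    have ux2: "\<forall>u'. (u', ux) \<in> L \<longrightarrow> \<not> (\<exists>w. (u', w) \<in> E \<and> (w, x) \<notin> L)"
    proof (intro allI impI)
      fix u' assume "(u',ux) \<in> L"
      then have "(u',x) \<in> L" using Ltr ux1(1) by blast
      then show "\<not> (\<exists>w. (u', w) \<in> E \<and> (w, x) \<notin> L)" using ux(2) \<open>(u',ux) \<in> L\<close> unfolding candv_def by blast
    qed
    have uxE: "(ux,x) \<in> E" using bft xV ux1 ux2 by blast
    have dx: "d x \<le> d ux + 1" using d_edge uxV uxE .
    have "ux = uy \<or> (ux,uy) \<in> L"
    proof (cases "(uy,x) \<in> L")
      case True
      obtain w where w: "(uy,w) \<in> E" "(w,y) \<notin> L" using uy(1) unfolding candv_def by blast
      have "(w,x) \<notin> L"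
      proof
        assume "(w,x) \<in> L"
        then have "(w,y) \<in> L" using Ltr[OF _ less.prems(2)] by blast
        then show False using w by blast
      qed
      then have "candv E L x uy"
        using True w unfolding candv_def by blast
      then have "(uy,ux) \<notin> L" using ux(2) by blast
      then show ?thesis using Ltot uxV uyV by blast
    next
      case False
      then have "x = uy \<or> (x,uy) \<in> L" using Ltot xV uyV by blast
      moreover have "(ux,x) \<in> L" using ux(1) unfolding candv_def by blast
      ultimately show ?thesis using Ltr[of ux x uy] by blast
    qed
    then have "d ux \<le> d uy"
    proof
      assume "(ux,uy) \<in> L"
      moreover have "d uy < n" using duy less.prems(1) y'(2) by simp
      ultimately show ?thesis using less.IH[of "d uy" uy ux] by simp
    qed simp
    then show ?thesis using dx duy y'(2) by simp
  qed
qed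

lemma d_less_L: "x \<in> V \<Longrightarrow> y \<in> V \<Longrightarrow> d x < d y \<Longrightarrow> (x,y) \<in> L"
  using mono_aux Ltot by (metis leD less_irrefl)

lemma lower_bound:
  fixes \<mu> :: "'v \<Rightarrow> nat"
  assumes CV: "C \<subseteq> V" and aC: "a \<in> C" and rC: "r \<notin> C"
  and cross: "\<And>x y. x \<in> C \<Longrightarrow> (y,x) \<in> E \<Longrightarrow> y \<notin> C \<Longrightarrow> x = a"
  and mu: "\<And>x y. x \<in> C \<Longrightarrow> y \<in> C \<Longrightarrow> (y,x) \<in> E \<Longrightarrow> \<mu> x \<le> \<mu> y + 1"
  and mua: "\<mu> a = 0"
  shows "x \<in> C \<Longrightarrow> d a + \<mu> x \<le> d x"
proof (induction "d x" arbitrary: x rule: less_induct)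
  case less
  show ?case
  proof (cases "x = a")
    case True then show ?thesis using mua by simp
  next
    case False
    have "x \<noteq> r" using less.prems rC by auto
    then obtain y where y: "(y,x) \<in> E" "d x = Suc (d y)" "y \<in> V" using d_parent less.prems CV by blast
    have yC: "y \<in> C" using cross[OF less.prems y(1)] False by blast
    have "d a + \<mu> y \<le> d y" using less.hyps[of y] y(2) yC by simp
    moreover have "\<mu> x \<le> \<mu> y + 1" using mu less.prems yC y(1) by blast
    ultimately show ?thesis using y(2) by simp
  qed
qed

lemma entry_parent:
  fixes \<mu> :: "'v \<Rightarrow> nat"
  assumes CV: "C \<subseteq> V" and aC: "a \<in> C" and rC: "r \<notin> C"
  and cross: "\<And>x y. x \<in> C \<Longrightarrow> (y,x) \<in> E \<Longrightarrow> y \<notin> C \<Longrightarrow> x = a"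
  and mu: "\<And>x y. x \<in> C \<Longrightarrow> y \<in> C \<Longrightarrow> (y,x) \<in> E \<Longrightarrow> \<mu> x \<le> \<mu> y + 1"
  and mua: "\<mu> a = 0"
  shows "\<exists>y. y \<notin> C \<and> (y,a) \<in> E \<and> d a = Suc (d y)"
proof -
  have "a \<noteq> r" using aC rC by auto
  then obtain y where y: "(y,a) \<in> E" "d a = Suc (d y)" "y \<in> V" using d_parent aC CV by blast
  have "y \<notin> C"
  proof
    assume "y \<in> C"
    then have "d a + \<mu> y \<le> d y"
      apply (intro lower_bound[of C a \<mu> y, OF CV aC rC])
      using cross mu mua by blast+
    then show False using y(2) by simp
  qed
  then show ?thesis using y by blast
qed

end



lemma iso_bft:
  assumes bij: "bij_betw f (gV G) (gV H)"
  and edges: "\<forall>x\<in>gV G. \<forall>y\<in>gV G. (x,y) \<in> gE G \<longleftrightarrow> (f x, f y) \<in> gE H"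
  and EG: "gE G \<subseteq> gV G \<times> gV G" and EH: "gE H \<subseteq> gV H \<times> gV H"
  and bft: "is_bft G L"
  shows "is_bft H ((\<lambda>(x,y). (f x, f y)) ` L)"
proof -
  define L' where "L' = (\<lambda>(x,y). (f x, f y)) ` L"
  have lin: "lin_order (gV G) L" using bft unfolding is_bft_def by blast
  note LV = lin_orderD(1)[OF lin] and Ltr = lin_orderD(2)[OF lin]
    and Lirr = lin_orderD(3)[OF lin] and Ltot = lin_orderD(4)[OF lin]
  have inj: "inj_on f (gV G)" and img: "f ` gV G = gV H" using bij unfolding bij_betw_def by auto
  have key: "\<And>a b. a \<in> gV G \<Longrightarrow> b \<in> gV G \<Longrightarrow> (f a, f b) \<in> L' \<longleftrightarrow> (a,b) \<in> L"
  proof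
    fix a b assume ab: "a \<in> gV G" "b \<in> gV G" "(f a, f b) \<in> L'"
    then obtain p q where pq: "(p,q) \<in> L" "f a = f p" "f b = f q" unfolding L'_def by auto
    have "p \<in> gV G" "q \<in> gV G" using pq(1) LV by auto
    then have "p = a" "q = b" using inj pq ab unfolding inj_on_def by auto
    then show "(a,b) \<in> L" using pq by simp
  qed (auto simp: L'_def)
  have L'V: "L' \<subseteq> gV H \<times> gV H" using LV img unfolding L'_def by auto
  have elemL': "\<And>p. p \<in> L' \<Longrightarrow> \<exists>a b. a \<in> gV G \<and> b \<in> gV G \<and> p = (f a, f b) \<and> (a,b) \<in> L"
    unfolding L'_def using LV by auto
  have surj: "\<And>x. x \<in> gV H \<Longrightarrow> \<exists>a\<in>gV G. x = f a" using img by auto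
  have "lin_order (gV H) L'"
    unfolding lin_order_def strict_linear_order_on_def
  proof (intro conjI)
    show "L' \<subseteq> gV H \<times> gV H" by (rule L'V)
    show "trans L'"
    proof (rule transI)
      fix x y z assume "(x,y) \<in> L'" "(y,z) \<in> L'"
      then obtain a b b' c where "a \<in> gV G" "b \<in> gV G" "b' \<in> gV G" "c \<in> gV G"
        "x = f a" "y = f b" "y = f b'" "z = f c" "(a,b) \<in> L" "(b',c) \<in> L"
        using elemL' by blast
      moreover then have "b = b'" using inj unfolding inj_on_def by metis
      ultimately have "(a,c) \<in> L" using Ltr[of a b c] by blast
      then show "(x,z) \<in> L'" using key \<open>a \<in> gV G\<close> \<open>c \<in> gV G\<close> \<open>x = f a\<close> \<open>z = f c\<close> by blast
    qed
    show "irrefl L'"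
      unfolding irrefl_on_def
    proof
      fix x show "(x,x) \<notin> L'"
      proof
        assume "(x,x) \<in> L'"
        then obtain a b where "a \<in> gV G" "b \<in> gV G" "x = f a" "x = f b" "(a,b) \<in> L"
          using elemL' by blast
        moreover then have "a = b" using inj unfolding inj_on_def by metis
        ultimately show False using Lirr by blast
      qed
    qed
    show "total_on (gV H) L'"
      unfolding total_on_def
    proof (intro ballI impI)
      fix x y assume "x \<in> gV H" "y \<in> gV H" "x \<noteq> y"
      then obtain a b where "a \<in> gV G" "b \<in> gV G" "x = f a" "y = f b" using surj by blast
      then show "(x,y) \<in> L' \<or> (y,x) \<in> L'" using key Ltot \<open>x \<noteq> y\<close> by blast
    qed
  qed
  moreover have cond: "\<forall>v\<in>gV H. \<forall>u. (u, v) \<in> L' \<and> (\<exists>w. (u, w) \<in> gE H \<and> (w, v) \<notin> L') \<and>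
        (\<forall>u'. (u', u) \<in> L' \<longrightarrow> \<not> (\<exists>w. (u', w) \<in> gE H \<and> (w, v) \<notin> L'))
        \<longrightarrow> (u, v) \<in> gE H"
  proof (intro ballI allI impI)
    fix v u
    assume vH: "v \<in> gV H" and h: "(u, v) \<in> L' \<and> (\<exists>w. (u, w) \<in> gE H \<and> (w, v) \<notin> L') \<and>
        (\<forall>u'. (u', u) \<in> L' \<longrightarrow> \<not> (\<exists>w. (u', w) \<in> gE H \<and> (w, v) \<notin> L'))"
    obtain u0 v0 where uv: "u0 \<in> gV G" "v0 \<in> gV G" "u = f u0" "v = f v0" "(u0,v0) \<in> L"
      using h elemL' by blast
    obtain w where w: "(u,w) \<in> gE H" "(w,v) \<notin> L'" using h by blast
    have "w \<in> gV H" using w EH by auto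
    then obtain w0 where w0: "w0 \<in> gV G" "w = f w0" using surj by blast
    have c1: "(u0,w0) \<in> gE G" using edges uv w w0 by blast
    have c2: "(w0,v0) \<notin> L" using key uv w w0 by blast
    have c3: "\<forall>u'. (u', u0) \<in> L \<longrightarrow> \<not> (\<exists>w. (u', w) \<in> gE G \<and> (w, v0) \<notin> L)"
    proof (intro allI impI notI)
      fix u' assume u': "(u',u0) \<in> L" "\<exists>w. (u', w) \<in> gE G \<and> (w, v0) \<notin> L"
      then obtain w' where w': "(u', w') \<in> gE G" "(w', v0) \<notin> L" by blast
      have u'V: "u' \<in> gV G" and w'V: "w' \<in> gV G" using u'(1) LV w'(1) EG by auto
      have "(f u', u) \<in> L'" using key u'V uv u'(1) by blast
      moreover have "(f u', f w') \<in> gE H" using edges u'V w'V w'(1) by blast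
      moreover have "(f w', v) \<notin> L'" using key w'V uv w'(2) by blast
      ultimately show False using h by blast
    qed
    have bftc: "\<forall>v\<in>gV G. \<forall>u. (u, v) \<in> L \<and> (\<exists>w. (u, w) \<in> gE G \<and> (w, v) \<notin> L) \<and>
        (\<forall>u'. (u', u) \<in> L \<longrightarrow> \<not> (\<exists>w. (u', w) \<in> gE G \<and> (w, v) \<notin> L))
        \<longrightarrow> (u, v) \<in> gE G" using bft unfolding is_bft_def by (rule conjunct2)
    have cc: "(u0, v0) \<in> L \<and> (\<exists>w. (u0, w) \<in> gE G \<and> (w, v0) \<notin> L) \<and>
        (\<forall>u'. (u', u0) \<in> L \<longrightarrow> \<not> (\<exists>w. (u', w) \<in> gE G \<and> (w, v0) \<notin> L))"
      using uv(5) c1 c2 c3 by blast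
    have "(u0,v0) \<in> gE G" using bftc[rule_format, OF uv(2) cc] .
    then show "(u,v) \<in> gE H" using edges uv by blast
  qed
  ultimately have "is_bft H L'" unfolding is_bft_def by (rule conjI)
  then show ?thesis unfolding L'_def .
qed



lemma dist_idx: "distinct xs \<Longrightarrow> i < length xs \<Longrightarrow> j < length xs \<Longrightarrow> xs!i = xs!j \<Longrightarrow> i = j"
  using nth_eq_iff_index_eq by blast

definition bcond :: "('v \<times> 'v) set \<Rightarrow> 'v list \<Rightarrow> 'v \<Rightarrow> bool" where
  "bcond E P v \<longleftrightarrow> (\<forall>i<length P. (\<exists>w. (P!i,w) \<in> E \<and> w \<notin> set P) \<and>
      (\<forall>i'<i. \<not> (\<exists>w. (P!i',w) \<in> E \<and> w \<notin> set P)) \<longrightarrow> (P!i, v) \<in> E)"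

definition good_list :: "('v \<times> 'v) set \<Rightarrow> 'v list \<Rightarrow> bool" where
  "good_list E xs \<longleftrightarrow> distinct xs \<and> (\<forall>j<length xs. bcond E (take j xs) (xs!j))"

lemma good_ext:
  assumes "good_list E xs" "bcond E xs v" "v \<notin> set xs"
  shows "good_list E (xs @ [v])"
  unfolding good_list_def
proof (intro conjI allI impI)
  show "distinct (xs @ [v])" using assms unfolding good_list_def by simp
  fix j assume j: "j < length (xs @ [v])"
  show "bcond E (take j (xs @ [v])) ((xs @ [v]) ! j)"
  proof (cases "j < length xs")
    case True
    have e: "take j (xs @ [v]) = take j xs" "(xs @ [v]) ! j = xs ! j" using True by (auto simp: nth_append)
    have "bcond E (take j xs) (xs ! j)" using assms(1) True unfolding good_list_def by blast
    then show ?thesis using e by simp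
  next
    case False
    then have "j = length xs" using j by simp
    then show ?thesis using assms(2) by simp
  qed
qed

lemma exists_next:
  assumes EV: "E \<subseteq> V \<times> V" and sub: "set xs \<subseteq> V" and ne: "set xs \<noteq> V"
  shows "\<exists>v\<in>V. v \<notin> set xs \<and> bcond E xs v"
proof (cases "\<exists>i<length xs. \<exists>w. (xs!i,w) \<in> E \<and> w \<notin> set xs")
  case True
  define P where "P i \<longleftrightarrow> i < length xs \<and> (\<exists>w. (xs!i,w) \<in> E \<and> w \<notin> set xs)" for i
  have "\<exists>i. P i" using True unfolding P_def by blast
  then have P0: "P (LEAST i. P i)" by (rule LeastI_ex)
  define i0 where "i0 = (LEAST i. P i)"
  obtain w where w: "(xs!i0,w) \<in> E" "w \<notin> set xs" using P0 unfolding P_def i0_def by blast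
  have "w \<in> V" using w EV by auto
  moreover have "bcond E xs w"
    unfolding bcond_def
  proof (intro allI impI)
    fix i assume i: "i < length xs" and h: "(\<exists>w. (xs!i,w) \<in> E \<and> w \<notin> set xs) \<and>
      (\<forall>i'<i. \<not> (\<exists>w. (xs!i',w) \<in> E \<and> w \<notin> set xs))"
    have "P i" using i h unfolding P_def by blast
    then have "i0 \<le> i" unfolding i0_def by (rule Least_le)
    moreover have "\<not> i0 < i"
    proof
      assume "i0 < i"
      then have "\<not> (\<exists>w. (xs!i0,w) \<in> E \<and> w \<notin> set xs)" using h by blast
      then show False using w by blast
    qed
    ultimately have "i = i0" by simp
    then show "(xs!i, w) \<in> E" using w by simp
  qed
  ultimately show ?thesis using w by blast
next
  case False
  have "\<exists>v. v \<in> V \<and> v \<notin> set xs" using sub ne by auto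
  then obtain v where "v \<in> V" "v \<notin> set xs" by blast
  moreover have "bcond E xs v" unfolding bcond_def using False by blast
  ultimately show ?thesis by blast
qed

lemma build_list:
  assumes finV: "finite V" and EV: "E \<subseteq> V \<times> V"
  shows "k \<le> card V \<Longrightarrow> \<exists>xs. good_list E xs \<and> set xs \<subseteq> V \<and> length xs = k"
proof (induction k)
  case 0
  show ?case by (rule exI[of _ "[]"]) (simp add: good_list_def)
next
  case (Suc k)
  then obtain xs where xs: "good_list E xs" "set xs \<subseteq> V" "length xs = k" by auto
  have "distinct xs" using xs(1) unfolding good_list_def by simp
  then have "card (set xs) = k" using xs(3) by (simp add: distinct_card)
  then have "set xs \<noteq> V" using Suc.prems by auto
  then obtain v where v: "v \<in> V" "v \<notin> set xs" "bcond E xs v" using exists_next[OF EV xs(2) \<open>set xs \<noteq> V\<close>] by blast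
  have "good_list E (xs @ [v])" using good_ext[OF xs(1) v(3) v(2)] .
  moreover have "set (xs @ [v]) \<subseteq> V" using xs(2) v(1) by simp
  moreover have "length (xs @ [v]) = Suc k" using xs(3) by simp
  ultimately show ?case by blast
qed

lemma bft_exists:
  assumes finV: "finite (gV G)" and EV: "gE G \<subseteq> gV G \<times> gV G"
  shows "\<exists>L. is_bft G L"
proof -
  obtain xs where xs: "good_list (gE G) xs" "set xs \<subseteq> gV G" "length xs = card (gV G)"
    using build_list[OF finV EV] by blast
  have dist: "distinct xs" using xs(1) good_list_def by blast
  have "card (set xs) = card (gV G)" using distinct_card[OF dist] xs(3) by simp
  then have setxs: "set xs = gV G" using card_subset_eq[OF finV xs(2)] by blast
  define L where "L = {(xs!i, xs!j) | i j. i < j \<and> j < length xs}"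
  have key: "\<And>i j. i < length xs \<Longrightarrow> j < length xs \<Longrightarrow> (xs!i, xs!j) \<in> L \<longleftrightarrow> i < j"
  proof
    fix i j assume ij: "i < length xs" "j < length xs" "(xs!i, xs!j) \<in> L"
    then obtain i' j' where "xs!i = xs!i'" "xs!j = xs!j'" "i' < j'" "j' < length xs" unfolding L_def by auto
    moreover have "i' < length xs" using \<open>i' < j'\<close> \<open>j' < length xs\<close> by simp
    ultimately have "i = i'" "j = j'" using dist_idx[OF dist, of i i'] dist_idx[OF dist, of j j'] ij by auto
    then show "i < j" using \<open>i' < j'\<close> by simp
  qed (auto simp: L_def)
  have elem: "\<And>x. x \<in> gV G \<Longrightarrow> \<exists>i<length xs. x = xs!i" using setxs by (metis in_set_conv_nth)
  have Lel: "\<And>p. p \<in> L \<Longrightarrow> \<exists>i j. i < j \<and> j < length xs \<and> p = (xs!i, xs!j)" unfolding L_def by auto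
  have lin: "lin_order (gV G) L"
    unfolding lin_order_def strict_linear_order_on_def
  proof (intro conjI)
    show "L \<subseteq> gV G \<times> gV G"
    proof
      fix p assume "p \<in> L"
      then obtain i j where "i < j" "j < length xs" "p = (xs!i, xs!j)" using Lel by blast
      then show "p \<in> gV G \<times> gV G" using setxs nth_mem[of i xs] nth_mem[of j xs] by auto
    qed
    show "trans L"
    proof (rule transI)
      fix x y z assume xy: "(x,y) \<in> L" and yz: "(y,z) \<in> L"
      obtain i j where ij: "i < j" "j < length xs" "x = xs!i" "y = xs!j" using Lel[OF xy] by blast
      obtain j' k where jk: "j' < k" "k < length xs" "y = xs!j'" "z = xs!k" using Lel[OF yz] by blast
      have jl: "j' < length xs" using jk by simp
      have "xs!j = xs!j'" using ij(4) jk(3) by simp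
      then have "j = j'" using dist_idx[OF dist ij(2) jl] by blast
      then have "i < k" using ij(1) jk(1) by simp
      then have "(xs!i, xs!k) \<in> L" using key[of i k] jk(2) by simp
      then show "(x,z) \<in> L" using ij(3) jk(4) by simp
    qed
    show "irrefl L" unfolding irrefl_on_def
    proof
      fix x show "(x,x) \<notin> L"
      proof
        assume xx: "(x,x) \<in> L"
        obtain i j where ij: "i < j" "j < length xs" "x = xs!i" "x = xs!j" using Lel[OF xx] by blast
        have il: "i < length xs" using ij by simp
        have "xs!i = xs!j" using ij(3,4) by simp
        then have "i = j" using dist_idx[OF dist il ij(2)] by blast
        then show False using ij(1) by simp
      qed
    qed
    show "total_on (gV G) L" unfolding total_on_def
    proof (intro ballI impI)
      fix x y assume "x \<in> gV G" "y \<in> gV G" "x \<noteq> y"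
      then obtain i j where "i < length xs" "j < length xs" "x = xs!i" "y = xs!j" using elem by blast
      moreover then have "i \<noteq> j" using \<open>x \<noteq> y\<close> by blast
      ultimately have "i < j \<or> j < i" using nat_neq_iff by blast
      then show "(x,y) \<in> L \<or> (y,x) \<in> L" using key \<open>i < length xs\<close> \<open>j < length xs\<close> \<open>x = xs!i\<close> \<open>y = xs!j\<close> by blast
    qed
  qed
  have tk: "\<And>w j. w \<in> gV G \<Longrightarrow> j < length xs \<Longrightarrow> (w, xs!j) \<in> L \<longleftrightarrow> w \<in> set (take j xs)"
  proof -
    fix w j assume w: "w \<in> gV G" and j: "j < length xs"
    obtain k where k: "k < length xs" "w = xs!k" using elem w by blast
    have "w \<in> set (take j xs) \<longleftrightarrow> k < j"
    proof
      assume "w \<in> set (take j xs)"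
      then obtain k' where "k' < length (take j xs)" "w = take j xs ! k'" by (metis in_set_conv_nth)
      then have "k' < j" "w = xs!k'" by auto
      moreover have "k' < length xs" using \<open>k' < j\<close> j by simp
      ultimately have "k = k'" using dist_idx[OF dist, of k k'] k by simp
      then show "k < j" using \<open>k' < j\<close> by simp
    next
      assume "k < j"
      then have "take j xs ! k = xs ! k" "k < length (take j xs)" using j by auto
      then show "w \<in> set (take j xs)" using k by (metis nth_mem)
    qed
    then show "(w, xs!j) \<in> L \<longleftrightarrow> w \<in> set (take j xs)" using key k j by simp
  qed
  have "\<forall>v\<in>gV G. \<forall>u. (u, v) \<in> L \<and> (\<exists>w. (u, w) \<in> gE G \<and> (w, v) \<notin> L) \<and>
        (\<forall>u'. (u', u) \<in> L \<longrightarrow> \<not> (\<exists>w. (u', w) \<in> gE G \<and> (w, v) \<notin> L))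
        \<longrightarrow> (u, v) \<in> gE G"
  proof (intro ballI allI impI)
    fix v u
    assume vG: "v \<in> gV G" and h: "(u, v) \<in> L \<and> (\<exists>w. (u, w) \<in> gE G \<and> (w, v) \<notin> L) \<and>
        (\<forall>u'. (u', u) \<in> L \<longrightarrow> \<not> (\<exists>w. (u', w) \<in> gE G \<and> (w, v) \<notin> L))"
    obtain i j where ij: "i < j" "j < length xs" "u = xs!i" "v = xs!j" using h Lel by blast
    have bc: "bcond (gE G) (take j xs) (xs!j)" using xs(1) ij unfolding good_list_def by blast
    have lt: "i < length (take j xs)" using ij by simp
    have tki: "take j xs ! i = xs ! i" using ij by simp
    have A1: "\<exists>w. (take j xs ! i, w) \<in> gE G \<and> w \<notin> set (take j xs)"
    proof -
      obtain w where w: "(u,w) \<in> gE G" "(w,v) \<notin> L" using h by blast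
      have "w \<in> gV G" using w EV by auto
      then have "w \<notin> set (take j xs)" using tk[of w j] ij(2) w(2) unfolding ij(4) by simp
      then show ?thesis using w tki ij by auto
    qed
    have A2: "\<forall>i'<i. \<not> (\<exists>w. (take j xs ! i', w) \<in> gE G \<and> w \<notin> set (take j xs))"
    proof (intro allI impI notI)
      fix i' assume i': "i' < i" and "\<exists>w. (take j xs ! i', w) \<in> gE G \<and> w \<notin> set (take j xs)"
      moreover have "take j xs ! i' = xs ! i'" using i' ij(1) by simp
      ultimately obtain w where w: "(xs ! i', w) \<in> gE G" "w \<notin> set (take j xs)" by auto
      have "w \<in> gV G" using w EV by auto
      then have "(w,v) \<notin> L" using tk[of w j] ij(2) w(2) unfolding ij(4) by simp
      moreover have "(xs!i', u) \<in> L" using key[of i' i] i' ij by simp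
      moreover have "\<forall>u'. (u', u) \<in> L \<longrightarrow> \<not> (\<exists>w. (u', w) \<in> gE G \<and> (w, v) \<notin> L)" using h by blast
      ultimately show False using w(1) by blast
    qed
    have "(take j xs ! i, xs!j) \<in> gE G" using bc[unfolded bcond_def, rule_format, OF lt conjI[OF A1 A2]] .
    then show "(u,v) \<in> gE G" using tki ij by simp
  qed
  then have "is_bft G L" unfolding is_bft_def by (rule conjI[OF lin])
  then show ?thesis by blast
qed



locale src =
  fixes A :: dstruct
  assumes inD: "A \<in> D2S"
begin

definition L0 where "L0 = (SOME L. is_successor_of (dV A) L (dmin A) (dmax A) (dS A))"

lemma succ: "is_successor_of (dV A) L0 (dmin A) (dmax A) (dS A)"
proof -
  have "\<exists>L. is_successor_of (dV A) L (dmin A) (dmax A) (dS A)" using inD unfolding D2S_def by blast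
  then show ?thesis unfolding L0_def by (rule someI_ex)
qed

lemma finV: "finite (dV A)" and RV: "dE A \<subseteq> dV A \<times> dV A" and sV: "ds A \<in> dV A" and tV: "dt A \<in> dV A"
  using inD unfolding D2S_def by auto

lemma linL0: "lin_order (dV A) L0" and m0V: "dmin A \<in> dV A" and m1V: "dmax A \<in> dV A"
  and m0least: "\<And>v. v \<in> dV A \<Longrightarrow> v \<noteq> dmin A \<Longrightarrow> (dmin A, v) \<in> L0"
  and m1great: "\<And>v. v \<in> dV A \<Longrightarrow> v \<noteq> dmax A \<Longrightarrow> (v, dmax A) \<in> L0"
  and Ssucc: "\<And>v. v \<in> dV A \<Longrightarrow> v \<noteq> dmax A \<Longrightarrow> (v, dS A v) \<in> L0"
  and Snb: "\<And>v w. v \<in> dV A \<Longrightarrow> v \<noteq> dmax A \<Longrightarrow> (v, w) \<in> L0 \<Longrightarrow> (w, dS A v) \<in> L0 \<Longrightarrow> False"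
  and Smax: "dS A (dmax A) = dmax A"
  using succ unfolding is_successor_of_def by blast+

lemmas L0V = lin_orderD(1)[OF linL0]
lemmas L0tr = lin_orderD(2)[OF linL0]
lemmas L0irr = lin_orderD(3)[OF linL0]
lemmas L0tot = lin_orderD(4)[OF linL0]

lemma S_V: "v \<in> dV A \<Longrightarrow> dS A v \<in> dV A"
  using Ssucc L0V Smax by (cases "v = dmax A") auto

lemma S_neq: "v \<in> dV A \<Longrightarrow> v \<noteq> dmax A \<Longrightarrow> dS A v \<noteq> v"
  using Ssucc L0irr by metis

definition pos :: "nat \<Rightarrow> nat" where "pos v = card {w \<in> dV A. (w,v) \<in> L0}"

lemma pos_S:
  assumes v: "v \<in> dV A" "v \<noteq> dmax A"
  shows "pos (dS A v) = Suc (pos v)"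
proof -
  have eq: "{w \<in> dV A. (w, dS A v) \<in> L0} = insert v {w \<in> dV A. (w,v) \<in> L0}"
  proof (intro equalityI subsetI)
    fix w assume "w \<in> {w \<in> dV A. (w, dS A v) \<in> L0}"
    then have w: "w \<in> dV A" "(w, dS A v) \<in> L0" by auto
    show "w \<in> insert v {w \<in> dV A. (w,v) \<in> L0}"
    proof (cases "w = v")
      case False
      then have "(w,v) \<in> L0 \<or> (v,w) \<in> L0" using L0tot w(1) v(1) by blast
      moreover have "(v,w) \<notin> L0" using Snb[OF v] w(2) by blast
      ultimately show ?thesis using w by blast
    qed simp
  next
    fix w assume "w \<in> insert v {w \<in> dV A. (w,v) \<in> L0}"
    then show "w \<in> {w \<in> dV A. (w, dS A v) \<in> L0}"
      using Ssucc[OF v] L0tr[of w v "dS A v"] v(1) by auto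
  qed
  have "v \<notin> {w \<in> dV A. (w,v) \<in> L0}" using L0irr by blast
  moreover have "finite {w \<in> dV A. (w,v) \<in> L0}" using finV by simp
  ultimately show ?thesis unfolding pos_def eq by simp
qed

lemma pos_m0: "pos (dmin A) = 0"
proof -
  have "{w \<in> dV A. (w, dmin A) \<in> L0} = {}"
  proof (rule ccontr)
    assume "{w \<in> dV A. (w, dmin A) \<in> L0} \<noteq> {}"
    then obtain w where w: "w \<in> dV A" "(w, dmin A) \<in> L0" by blast
    then have "w \<noteq> dmin A" using L0irr by blast
    then have "(dmin A, w) \<in> L0" using m0least w(1) by blast
    then have "(w,w) \<in> L0" using L0tr[OF w(2)] by blast
    then show False using L0irr by blast
  qed
  then show ?thesis unfolding pos_def by (metis card.empty)
qed

lemma pos_strict: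
  assumes "v \<in> dV A" "w \<in> dV A" "(v,w) \<in> L0"
  shows "pos v < pos w"
proof -
  have "{u \<in> dV A. (u,v) \<in> L0} \<subset> {u \<in> dV A. (u,w) \<in> L0}"
  proof
    show "{u \<in> dV A. (u,v) \<in> L0} \<subseteq> {u \<in> dV A. (u,w) \<in> L0}"
      using L0tr[OF _ assms(3)] by blast
    have "v \<in> {u \<in> dV A. (u,w) \<in> L0}" using assms by blast
    moreover have "v \<notin> {u \<in> dV A. (u,v) \<in> L0}" using L0irr by blast
    ultimately show "{u \<in> dV A. (u,v) \<in> L0} \<noteq> {u \<in> dV A. (u,w) \<in> L0}" by blast
  qed
  then show ?thesis unfolding pos_def using finV by (simp add: psubset_card_mono)
qed

lemma pos_inj: "v \<in> dV A \<Longrightarrow> w \<in> dV A \<Longrightarrow> pos v = pos w \<Longrightarrow> v = w"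
  using pos_strict L0tot by (metis less_irrefl)

lemma pos_le: "v \<in> dV A \<Longrightarrow> pos v \<le> pos (dmax A)"
  using pos_strict m1great m1V by (cases "v = dmax A") (auto intro: less_imp_le)

lemma pos_m1: "Suc (pos (dmax A)) = card (dV A)"
proof -
  have "{w \<in> dV A. (w, dmax A) \<in> L0} = dV A - {dmax A}"
    using m1great L0irr by blast
  then show ?thesis unfolding pos_def using finV m1V
    by (simp add: card_Diff_singleton) (metis card_Diff1_less card_gt_0_iff empty_iff Suc_pred)
qed

lemma iter: "j \<le> pos (dmax A) \<Longrightarrow> (dS A ^^ j) (dmin A) \<in> dV A \<and> pos ((dS A ^^ j) (dmin A)) = j"
proof (induction j)
  case 0
  then show ?case using m0V pos_m0 by simp
next
  case (Suc j)
  then have IH: "(dS A ^^ j) (dmin A) \<in> dV A" "pos ((dS A ^^ j) (dmin A)) = j" by auto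
  have "(dS A ^^ j) (dmin A) \<noteq> dmax A" using IH(2) Suc.prems by auto
  then show ?case using IH S_V pos_S by simp
qed

lemma iter_surj: "v \<in> dV A \<Longrightarrow> (dS A ^^ pos v) (dmin A) = v"
  using iter[of "pos v"] pos_le pos_inj by blast

lemma iter_m1: "(dS A ^^ pos (dmax A)) (dmin A) = dmax A"
  using iter_surj m1V by blast

end



definition kor :: "kfm \<Rightarrow> kfm \<Rightarrow> kfm" where "kor p q = KNot (KAnd (KNot p) (KNot q))"

lemma ksat_kor[simp]: "ksat A \<sigma> (kor p q) \<longleftrightarrow> ksat A \<sigma> p \<or> ksat A \<sigma> q"
  unfolding kor_def by simp

lemma kfv_kor[simp]: "kfv (kor p q) = kfv p \<union> kfv q"
  unfolding kor_def by simp

definition fdom :: kfm where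
  "fdom = KAnd (kor (KEq (KVar 0) KCmin) (KEq (KVar 0) KCmax))
     (kor (KEq (KVar 1) KCmin) (KAnd (KEq (KVar 1) KCmax)
       (kor (KAnd (KEq (KVar 2) KCmin) (KEq (KVar 3) KCmin))
         (kor (KAnd (KEq (KVar 2) KCmax) (KEq (KVar 3) KCmin))
           (KAnd (KEq (KVar 0) KCmin) (KAnd (KEq (KVar 2) KCmin) (KEq (KVar 3) KCmax)))))))"

definition flay :: "nat \<Rightarrow> nat \<Rightarrow> kfm" where
  "flay x y = KAnd (KEq (KVar x) (KVar y)) (KAnd (KEq (KVar (x+1)) KCmin) (KAnd (KEq (KVar (y+1)) KCmin)
     (KAnd (KEq (KVar (y+3)) (KSucc (KVar (x+3)))) (KAnd (KNot (KEq (KVar (x+3)) KCmax))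
     (kor (KEq (KVar (x+2)) (KVar (y+2))) (KRel (KVar (x+2)) (KVar (y+2))))))))"

definition fz :: "nat \<Rightarrow> nat \<Rightarrow> kfm" where
  "fz x y = KAnd (KEq (KVar (x+1)) KCmax) (KAnd (KEq (KVar (x+2)) KCmin) (KAnd (KEq (KVar (x+3)) KCmin)
     (KAnd (KEq (KVar y) (KVar x)) (KAnd (KEq (KVar (y+1)) KCmin) (KEq (KVar (y+3)) KCmin)))))"

definition fp :: "nat \<Rightarrow> nat \<Rightarrow> kfm" where
  "fp x y = KAnd (KEq (KVar (x+1)) KCmax) (KAnd (KEq (KVar (x+2)) KCmax) (KAnd (KEq (KVar (x+3)) KCmin)
     (KAnd (KEq (KVar y) (KVar x)) (KAnd (KEq (KVar (y+1)) KCmin) (KAnd (KEq (KVar (y+2)) KCs)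
     (KEq (KVar (y+3)) KCmax))))))"

definition fh :: "nat \<Rightarrow> nat \<Rightarrow> kfm" where
  "fh x y = KAnd (KEq (KVar x) KCmin) (KAnd (KEq (KVar (x+1)) KCmax) (KAnd (KEq (KVar (x+2)) KCmin)
     (KAnd (KEq (KVar (x+3)) KCmax) (KAnd (KEq (KVar (y+1)) KCmin) (KAnd (KEq (KVar (y+2)) KCs)
     (KEq (KVar (y+3)) KCmin))))))"

definition fedge :: kfm where
  "fedge = KAnd (KNot (KEq KCmin KCmax))
     (kor (kor (flay 0 4) (flay 4 0)) (kor (kor (fz 0 4) (fz 4 0)) (kor (kor (fp 0 4) (fp 4 0)) (kor (fh 0 4) (fh 4 0)))))"

definition \<pi>0 :: interp where
  "\<pi>0 = \<lparr> ik = 4, idom = fdom, iedge = fedge,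
     iconsts = [([], [KCmin, KCmax, KCmin, KCmax]), ([], [KCmin, KCmin, KCs, KCmin]),
                ([], [KCmin, KCmin, KCt, KCmax]), ([], [KCmin, KCmax, KCmax, KCmin]),
                ([], [KCmax, KCmin, KCt, KCmax]), ([], [KCmax, KCmax, KCmax, KCmin])] \<rparr>"

lemma kfv_flay: "kfv (flay x y) \<subseteq> {x..x+3} \<union> {y..y+3}"
  unfolding flay_def by auto
lemma kfv_fz: "kfv (fz x y) \<subseteq> {x..x+3} \<union> {y..y+3}"
  unfolding fz_def by auto
lemma kfv_fp: "kfv (fp x y) \<subseteq> {x..x+3} \<union> {y..y+3}"
  unfolding fp_def by auto
lemma kfv_fh: "kfv (fh x y) \<subseteq> {x..x+3} \<union> {y..y+3}"
  unfolding fh_def by auto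

lemma kfv_fedge: "kfv fedge \<subseteq> {..<2*4}"
proof -
  have a: "{0..0+3} \<union> {4..4+3} \<subseteq> {..<2*(4::nat)}" "{4..4+3} \<union> {0..0+3} \<subseteq> {..<2*(4::nat)}" by auto
  show ?thesis unfolding fedge_def
    using kfv_flay[of 0 4] kfv_flay[of 4 0] kfv_fz[of 0 4] kfv_fz[of 4 0]
      kfv_fp[of 0 4] kfv_fp[of 4 0] kfv_fh[of 0 4] kfv_fh[of 4 0] a
    by (simp only: kfv.simps kfv_kor kfv_t.simps Un_empty_left Un_subset_iff) blast
qed

lemma kfv_fdom: "kfv fdom \<subseteq> {..<4}"
  unfolding fdom_def by auto

lemma wf_\<pi>0: "wf_interp 6 \<pi>0"
  unfolding wf_interp_def
proof (intro conjI)
  show "kfv (idom \<pi>0) \<subseteq> {..<ik \<pi>0}" using kfv_fdom by (simp add: \<pi>0_def)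
  show "kfv (iedge \<pi>0) \<subseteq> {..<2 * ik \<pi>0}" using kfv_fedge by (simp add: \<pi>0_def)
  show "length (iconsts \<pi>0) = 6" by (simp add: \<pi>0_def)
  show "\<forall>(cs, d)\<in>set (iconsts \<pi>0). closed_tuple (ik \<pi>0) d \<and>
        (\<forall>(c, ts)\<in>set cs. kfv c = {} \<and> closed_tuple (ik \<pi>0) ts)"
    by (simp add: \<pi>0_def closed_tuple_def)
qed

lemma len4: "length xs = 4 \<longleftrightarrow> (\<exists>a b c d. xs = [a,b,c,d])"
  by (auto simp: numeral_eq_Suc length_Suc_conv)

context src
begin

abbreviation "m0 \<equiv> dmin A"
abbreviation "m1 \<equiv> dmax A"

definition domP :: "nat list \<Rightarrow> bool" where
  "domP xs \<longleftrightarrow> (xs!0 = m0 \<or> xs!0 = m1) \<and> (xs!1 = m0 \<or> (xs!1 = m1 \<and>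
     ((xs!2 = m0 \<and> xs!3 = m0) \<or> (xs!2 = m1 \<and> xs!3 = m0) \<or> (xs!0 = m0 \<and> xs!2 = m0 \<and> xs!3 = m1))))"

definition layP where "layP xs ys \<longleftrightarrow> xs!0 = ys!0 \<and> xs!1 = m0 \<and> ys!1 = m0 \<and> ys!3 = dS A (xs!3) \<and>
   xs!3 \<noteq> m1 \<and> (xs!2 = ys!2 \<or> (xs!2, ys!2) \<in> dE A)"
definition zP where "zP xs ys \<longleftrightarrow> xs!1 = m1 \<and> xs!2 = m0 \<and> xs!3 = m0 \<and> ys!0 = xs!0 \<and> ys!1 = m0 \<and> ys!3 = m0"
definition pP where "pP xs ys \<longleftrightarrow> xs!1 = m1 \<and> xs!2 = m1 \<and> xs!3 = m0 \<and> ys!0 = xs!0 \<and> ys!1 = m0 \<and>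
   ys!2 = ds A \<and> ys!3 = m1"
definition hP where "hP xs ys \<longleftrightarrow> xs!0 = m0 \<and> xs!1 = m1 \<and> xs!2 = m0 \<and> xs!3 = m1 \<and> ys!1 = m0 \<and>
   ys!2 = ds A \<and> ys!3 = m0"

definition edgeP where "edgeP xs ys \<longleftrightarrow> m0 \<noteq> m1 \<and> ((layP xs ys \<or> layP ys xs) \<or> ((zP xs ys \<or> zP ys xs) \<or>
   ((pP xs ys \<or> pP ys xs) \<or> (hP xs ys \<or> hP ys xs))))"

lemma ksat_dom: "length xs = 4 \<Longrightarrow> ksat A (tuple_assign xs) fdom \<longleftrightarrow> domP xs"
  unfolding len4 by (elim exE) (simp add: fdom_def domP_def tuple_assign_def)

lemma ksat_edge: "length xs = 4 \<Longrightarrow> length ys = 4 \<Longrightarrow> ksat A (tuple_assign (xs @ ys)) fedge \<longleftrightarrow> edgeP xs ys"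
  unfolding len4
  by (elim exE) (simp add: fedge_def flay_def fz_def fp_def fh_def edgeP_def layP_def zP_def pP_def hP_def tuple_assign_def)

definition G where "G = interp_struct \<pi>0 A"

lemma gV_G: "x \<in> gV G \<longleftrightarrow> length x = 4 \<and> set x \<subseteq> dV A \<and> domP x"
  unfolding G_def interp_struct_def \<pi>0_def using ksat_dom by auto

lemma gE_G: "(x,y) \<in> gE G \<longleftrightarrow> x \<in> gV G \<and> y \<in> gV G \<and> edgeP x y"
  unfolding G_def interp_struct_def \<pi>0_def using ksat_edge by auto

lemma gc_G: "gc G = [[m0,m1,m0,m1], [m0,m0,ds A,m0], [m0,m0,dt A,m1], [m0,m1,m1,m0],
   [m1,m0,dt A,m1], [m1,m1,m1,m0]]"
  unfolding G_def interp_struct_def \<pi>0_def by simp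

definition inV :: "nat list \<Rightarrow> bool" where
  "inV x \<longleftrightarrow> (\<exists>c v i. (c = m0 \<or> c = m1) \<and> v \<in> dV A \<and> i \<in> dV A \<and> x = [c,m0,v,i]) \<or>
     (\<exists>c. (c = m0 \<or> c = m1) \<and> x = [c,m1,m0,m0]) \<or> (\<exists>c. (c = m0 \<or> c = m1) \<and> x = [c,m1,m1,m0]) \<or>
     x = [m0,m1,m0,m1]"

lemma gV_inV: "x \<in> gV G \<longleftrightarrow> inV x"
  unfolding gV_G inV_def domP_def len4 using m0V m1V by auto

end



lemma path_relpow: "rtrancl_path (\<lambda>a b. (a,b) \<in> R) x xs y \<Longrightarrow> (x,y) \<in> R ^^ length xs"
proof (induction rule: rtrancl_path.induct)
  case (base x) then show ?case by simp
next
  case (step x y ys z)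
  have "(x,z) \<in> R ^^ Suc (length ys)" using relpow_Suc_I2[of x y R z "length ys"] step by blast
  then show ?case by simp
qed

lemma least_exists:
  assumes lin: "lin_order V L" and fin: "finite V" and ne: "V \<noteq> {}"
  shows "\<exists>r\<in>V. \<forall>x\<in>V. x \<noteq> r \<longrightarrow> (r,x) \<in> L"
proof -
  note LV = lin_orderD(1)[OF lin] and Lirr = lin_orderD(3)[OF lin] and Ltot = lin_orderD(4)[OF lin]
  have finL: "finite L" using LV fin by (meson finite_SigmaI rev_finite_subset)
  have "trans L" using lin unfolding lin_order_def strict_linear_order_on_def by blast
  then have "L\<^sup>+ = L" by (rule trancl_id)
  then have "acyclic L" using Lirr by (simp add: acyclic_def)
  then have wfL: "wf L" using finL finite_acyclic_wf by blast
  obtain x0 where "x0 \<in> V" using ne by blast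
  obtain r where r: "r \<in> V" "\<And>y. (y,r) \<in> L \<Longrightarrow> y \<notin> V"
    using wfE_min[OF wfL \<open>x0 \<in> V\<close>] by blast
  have "\<forall>x\<in>V. x \<noteq> r \<longrightarrow> (r,x) \<in> L"
  proof (intro ballI impI)
    fix x assume "x \<in> V" "x \<noteq> r"
    then have "(r,x) \<in> L \<or> (x,r) \<in> L" using Ltot r(1) by blast
    then show "(r,x) \<in> L" using r(2) \<open>x \<in> V\<close> by blast
  qed
  then show ?thesis using r(1) by blast
qed

context src
begin

lemma relpow_V: "(ds A, v) \<in> dE A ^^ k \<Longrightarrow> v \<in> dV A"
proof (induction k arbitrary: v)
  case 0 then show ?case using sV by simp
next
  case (Suc k)
  then obtain u where "(u,v) \<in> dE A" by (meson relpow_Suc_E)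
  then show ?case using RV by auto
qed

lemma reach_bound:
  assumes "(ds A, dt A) \<in> (dE A)\<^sup>*"
  shows "\<exists>k \<le> pos m1. (ds A, dt A) \<in> dE A ^^ k"
proof -
  have "(\<lambda>a b. (a,b) \<in> dE A)\<^sup>*\<^sup>* (ds A) (dt A)" using assms by (simp add: rtrancl_def)
  then obtain xs where "rtrancl_path (\<lambda>a b. (a,b) \<in> dE A) (ds A) xs (dt A)"
    using rtranclp_eq_rtrancl_path by metis
  then obtain xs' where p: "rtrancl_path (\<lambda>a b. (a,b) \<in> dE A) (ds A) xs' (dt A)" "distinct (ds A # xs')"
    using rtrancl_path_distinct by metis
  have "set xs' \<subseteq> dV A"
  proof
    fix z assume "z \<in> set xs'"
    then have "Rangep (\<lambda>a b. (a,b) \<in> dE A) z" using rtrancl_path_Range p(1) by metis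
    then show "z \<in> dV A" using RV by auto
  qed
  then have "set (ds A # xs') \<subseteq> dV A" using sV by simp
  then have "card (set (ds A # xs')) \<le> card (dV A)" using finV card_mono by blast
  then have "Suc (length xs') \<le> Suc (pos m1)" using p(2) distinct_card pos_m1 by (metis length_Cons)
  then show ?thesis using path_relpow[OF p(1)] by auto
qed

lemma sym_edgeP: "edgeP x y \<longleftrightarrow> edgeP y x"
  unfolding edgeP_def by blast

lemma symG: "sym (gE G)"
  unfolding sym_def using gE_G sym_edgeP by blast

lemma finG: "finite (gV G)"
proof -
  have "gV G \<subseteq> {xs. set xs \<subseteq> dV A \<and> length xs = 4}" using gV_G by auto
  moreover have "finite {xs. set xs \<subseteq> dV A \<and> length xs = 4}" using finV by (rule finite_lists_length_eq)
  ultimately show ?thesis by (rule finite_subset)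
qed

lemma EG: "gE G \<subseteq> gV G \<times> gV G" using gE_G by auto

lemma irrG: "(x,x) \<notin> gE G"
proof
  assume "(x,x) \<in> gE G"
  then have xx: "x \<in> gV G" "edgeP x x" using gE_G by auto
  then have "length x = 4" unfolding gV_G by auto
  then obtain a b c d where x: "x = [a,b,c,d]" unfolding len4 by blast
  have "d \<in> dV A" using xx(1) unfolding gV_G x by auto
  then show False using S_neq[of d] xx(2) unfolding edgeP_def layP_def zP_def pP_def hP_def x by auto
qed

lemma edge_lay:
  assumes "c = m0 \<or> c = m1" "u \<in> dV A" "v \<in> dV A" "i \<in> dV A" "i \<noteq> m1" "u = v \<or> (u,v) \<in> dE A" "m0 \<noteq> m1"
  shows "([c,m0,u,i], [c,m0,v,dS A i]) \<in> gE G" "([c,m0,v,dS A i], [c,m0,u,i]) \<in> gE G"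
  using assms S_V[OF assms(4)] unfolding gE_G gV_inV inV_def edgeP_def layP_def by auto

lemma edge_z:
  assumes "c = m0 \<or> c = m1" "v \<in> dV A" "m0 \<noteq> m1"
  shows "([c,m1,m0,m0], [c,m0,v,m0]) \<in> gE G" "([c,m0,v,m0], [c,m1,m0,m0]) \<in> gE G"
  using assms m0V unfolding gE_G gV_inV inV_def edgeP_def zP_def by auto

lemma edge_p:
  assumes "c = m0 \<or> c = m1" "m0 \<noteq> m1"
  shows "([c,m1,m1,m0], [c,m0,ds A,m1]) \<in> gE G" "([c,m0,ds A,m1], [c,m1,m1,m0]) \<in> gE G"
  using assms m1V sV unfolding gE_G gV_inV inV_def edgeP_def pP_def by auto

lemma edge_h:
  assumes "c = m0 \<or> c = m1" "m0 \<noteq> m1"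
  shows "([m0,m1,m0,m1], [c,m0,ds A,m0]) \<in> gE G" "([c,m0,ds A,m0], [m0,m1,m0,m1]) \<in> gE G"
  using assms m0V sV unfolding gE_G gV_inV inV_def edgeP_def hP_def by auto

lemma edge_cases:
  assumes "(x,y) \<in> gE G"
  shows "(\<exists>c u v i. (c = m0 \<or> c = m1) \<and> u \<in> dV A \<and> v \<in> dV A \<and> i \<in> dV A \<and> i \<noteq> m1 \<and> (u = v \<or> (u,v) \<in> dE A) \<and>
       ((x = [c,m0,u,i] \<and> y = [c,m0,v,dS A i]) \<or> (y = [c,m0,u,i] \<and> x = [c,m0,v,dS A i]))) \<or>
     (\<exists>c v. (c = m0 \<or> c = m1) \<and> v \<in> dV A \<and> ((x = [c,m1,m0,m0] \<and> y = [c,m0,v,m0]) \<or> (y = [c,m1,m0,m0] \<and> x = [c,m0,v,m0]))) \<or>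
     (\<exists>c. (c = m0 \<or> c = m1) \<and> ((x = [c,m1,m1,m0] \<and> y = [c,m0,ds A,m1]) \<or> (y = [c,m1,m1,m0] \<and> x = [c,m0,ds A,m1]))) \<or>
     (\<exists>c. (c = m0 \<or> c = m1) \<and> ((x = [m0,m1,m0,m1] \<and> y = [c,m0,ds A,m0]) \<or> (y = [m0,m1,m0,m1] \<and> x = [c,m0,ds A,m0])))"
proof -
  have xy: "x \<in> gV G" "y \<in> gV G" "edgeP x y" using assms gE_G by auto
  have "length x = 4" "length y = 4" using xy(1,2) unfolding gV_G by auto
  then obtain a b c d e f g h where x: "x = [a,b,c,d]" and y: "y = [e,f,g,h]" unfolding len4 by blast
  have xV: "a \<in> dV A" "b \<in> dV A" "c \<in> dV A" "d \<in> dV A" using xy(1) x gV_G by auto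
  have yV: "e \<in> dV A" "f \<in> dV A" "g \<in> dV A" "h \<in> dV A" using xy(2) y gV_G by auto
  have xd: "domP x" "domP y" using xy gV_G by auto
  have ca: "a = m0 \<or> a = m1" "e = m0 \<or> e = m1" using xd unfolding domP_def x y by simp_all
  have "layP x y \<or> layP y x \<or> zP x y \<or> zP y x \<or> pP x y \<or> pP y x \<or> hP x y \<or> hP y x"
    using xy(3) unfolding edgeP_def by blast
  then show ?thesis
  proof (elim disjE)
    assume "layP x y"
    then have h: "a = e" "b = m0" "f = m0" "h = dS A d" "d \<noteq> m1" "c = g \<or> (c,g) \<in> dE A"
      unfolding layP_def x y by auto
    show ?thesis
      apply (rule disjI1)
      apply (rule exI[of _ a], rule exI[of _ c], rule exI[of _ g], rule exI[of _ d])
      using h ca xV yV unfolding x y by auto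
  next
    assume "layP y x"
    then have h: "a = e" "f = m0" "b = m0" "d = dS A h" "h \<noteq> m1" "g = c \<or> (g,c) \<in> dE A"
      unfolding layP_def x y by auto
    show ?thesis
      apply (rule disjI1)
      apply (rule exI[of _ a], rule exI[of _ g], rule exI[of _ c], rule exI[of _ h])
      using h ca xV yV unfolding x y by auto
  next
    assume "zP x y"
    then have h: "b = m1" "c = m0" "d = m0" "e = a" "f = m0" "h = m0"
      unfolding zP_def x y by auto
    show ?thesis
      apply (rule disjI2, rule disjI1)
      apply (rule exI[of _ a], rule exI[of _ g])
      using h ca xV yV unfolding x y by auto
  next
    assume "zP y x"
    then have h: "f = m1" "g = m0" "h = m0" "a = e" "b = m0" "d = m0"
      unfolding zP_def x y by auto
    show ?thesis
      apply (rule disjI2, rule disjI1)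
      apply (rule exI[of _ a], rule exI[of _ c])
      using h ca xV yV unfolding x y by auto
  next
    assume "pP x y"
    then have h: "b = m1" "c = m1" "d = m0" "e = a" "f = m0" "g = ds A" "h = m1"
      unfolding pP_def x y by auto
    show ?thesis
      apply (rule disjI2, rule disjI2, rule disjI1)
      apply (rule exI[of _ a])
      using h ca unfolding x y by auto
  next
    assume "pP y x"
    then have h: "f = m1" "g = m1" "h = m0" "a = e" "b = m0" "c = ds A" "d = m1"
      unfolding pP_def x y by auto
    show ?thesis
      apply (rule disjI2, rule disjI2, rule disjI1)
      apply (rule exI[of _ a])
      using h ca unfolding x y by auto
  next
    assume "hP x y"
    then have h: "a = m0" "b = m1" "c = m0" "d = m1" "f = m0" "g = ds A" "h = m0"
      unfolding hP_def x y by auto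
    show ?thesis
      apply (rule disjI2, rule disjI2, rule disjI2)
      apply (rule exI[of _ e])
      using h ca unfolding x y by auto
  next
    assume "hP y x"
    then have h: "e = m0" "f = m1" "g = m0" "h = m1" "b = m0" "c = ds A" "d = m0"
      unfolding hP_def x y by auto
    show ?thesis
      apply (rule disjI2, rule disjI2, rule disjI2)
      apply (rule exI[of _ a])
      using h ca unfolding x y by auto
  qed
qed

end



lemma rtrancl_sym: "sym E \<Longrightarrow> (x,y) \<in> E\<^sup>* \<Longrightarrow> (y,x) \<in> E\<^sup>*"
  by (metis rtrancl_converseI sym_conv_converse_eq)

locale anal = src +
  fixes L :: "(nat list \<times> nat list) set" and r :: "nat list"
  assumes nt: "dmin A \<noteq> dmax A" and bftL: "is_bft G L" and rG: "r \<in> gV G"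
    and rleastG: "\<forall>x\<in>gV G. x \<noteq> r \<longrightarrow> (r,x) \<in> L"
begin

abbreviation "Hv \<equiv> [m0, m1, m0, m1]"

lemma layer0: "c = m0 \<or> c = m1 \<Longrightarrow> v \<in> dV A \<Longrightarrow> ([c,m0,v,m0], Hv) \<in> (gE G)\<^sup>*"
proof -
  assume c: "c = m0 \<or> c = m1" and v: "v \<in> dV A"
  have "([c,m0,ds A,m0], Hv) \<in> gE G" using edge_h(2)[OF c nt] .
  then have "([c,m1,m0,m0], Hv) \<in> (gE G)\<^sup>*" using edge_z(1)[OF c sV nt]
    by (meson converse_rtrancl_into_rtrancl r_into_rtrancl)
  then show ?thesis using edge_z(2)[OF c v nt] by (meson converse_rtrancl_into_rtrancl)
qed

lemma layers: "c = m0 \<or> c = m1 \<Longrightarrow> v \<in> dV A \<Longrightarrow> j \<le> pos m1 \<Longrightarrow> ([c,m0,v,(dS A ^^ j) m0], Hv) \<in> (gE G)\<^sup>*"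
proof (induction j)
  case 0 then show ?case using layer0 by simp
next
  case (Suc j)
  define i where "i = (dS A ^^ j) m0"
  have i: "i \<in> dV A" "pos i = j" using iter[of j] Suc.prems unfolding i_def by auto
  have "i \<noteq> m1" using i(2) Suc.prems by auto
  then have "([c,m0,v,dS A i], [c,m0,v,i]) \<in> gE G" using edge_lay(2)[OF Suc.prems(1) Suc.prems(2) Suc.prems(2) i(1)] nt by blast
  moreover have "([c,m0,v,i], Hv) \<in> (gE G)\<^sup>*" using Suc unfolding i_def by simp
  ultimately show ?case unfolding i_def by (simp add: converse_rtrancl_into_rtrancl)
qed

lemma conn_H: "x \<in> gV G \<Longrightarrow> (x, Hv) \<in> (gE G)\<^sup>*"
proof -
  assume "x \<in> gV G"
  then have ix: "inV x" using gV_inV by blast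
  consider (l) c v i where "c = m0 \<or> c = m1" "v \<in> dV A" "i \<in> dV A" "x = [c,m0,v,i]"
    | (z) c where "c = m0 \<or> c = m1" "x = [c,m1,m0,m0]"
    | (p) c where "c = m0 \<or> c = m1" "x = [c,m1,m1,m0]"
    | (h) "x = Hv"
    using ix unfolding inV_def by (elim disjE exE conjE) blast+
  then show ?thesis
  proof cases
    case l
    then show ?thesis using layers[of c v "pos i"] iter_surj pos_le by simp
  next
    case z
    then show ?thesis using layer0[of c "ds A"] sV edge_z(1)[OF z(1) sV nt]
      by (meson converse_rtrancl_into_rtrancl)
  next
    case p
    have "([c,m0,ds A,m1], Hv) \<in> (gE G)\<^sup>*" using layers[of c "ds A" "pos m1"] p(1) sV iter_m1 by simp
    then show ?thesis using p edge_p(1)[OF p(1) nt] by (meson converse_rtrancl_into_rtrancl)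
  next
    case h then show ?thesis by simp
  qed
qed

lemma connG: "\<forall>x\<in>gV G. (r,x) \<in> (gE G)\<^sup>*"
proof
  fix x assume "x \<in> gV G"
  have "(r, Hv) \<in> (gE G)\<^sup>*" by (rule conn_H[OF rG])
  moreover have "(Hv, x) \<in> (gE G)\<^sup>*" by (rule rtrancl_sym[OF symG conn_H[OF \<open>x \<in> gV G\<close>]])
  ultimately show "(r,x) \<in> (gE G)\<^sup>*" by (rule rtrancl_trans)
qed

end

sublocale anal \<subseteq> b: bfs "gV G" "gE G" L r
proof (unfold_locales)
  show "finite (gV G)" by (rule finG)
  show "gE G \<subseteq> gV G \<times> gV G" by (rule EG)
  show "lin_order (gV G) L" using bftL unfolding is_bft_def by blast
  show "\<forall>v\<in>gV G. \<forall>u. (u, v) \<in> L \<and> (\<exists>w. (u, w) \<in> gE G \<and> (w, v) \<notin> L) \<and>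
        (\<forall>u'. (u', u) \<in> L \<longrightarrow> \<not> (\<exists>w. (u', w) \<in> gE G \<and> (w, v) \<notin> L)) \<longrightarrow> (u, v) \<in> gE G"
    using bftL unfolding is_bft_def by (rule conjunct2)
  show "r \<in> gV G" by (rule rG)
  show "\<forall>x\<in>gV G. x \<noteq> r \<longrightarrow> (r,x) \<in> L" by (rule rleastG)
  show "\<forall>x\<in>gV G. (r,x) \<in> (gE G)\<^sup>*" by (rule connG)
qed



context anal
begin

definition Cc :: "nat \<Rightarrow> nat list set" where "Cc c = {x \<in> gV G. x!0 = c \<and> x \<noteq> Hv}"

definition mu :: "nat list \<Rightarrow> nat" where
  "mu x = (if x!1 = m1 then (if x!2 = m0 then 1 else Suc (pos m1))
           else pos (x!3) + (if (ds A, x!2) \<in> (dE A)\<^sup>* then 0 else 2))"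

lemma reach_R: "(u,v) \<in> dE A \<Longrightarrow> (ds A, u) \<in> (dE A)\<^sup>* \<Longrightarrow> (ds A, v) \<in> (dE A)\<^sup>*"
  by (rule rtrancl.rtrancl_into_rtrancl)

lemma cross:
  assumes "x \<in> Cc c" "(y,x) \<in> gE G" "y \<notin> Cc c"
  shows "x = [c,m0,ds A,m0] \<and> y = Hv"
proof -
  have yG: "y \<in> gV G" using assms(2) EG by auto
  show ?thesis using edge_cases[OF assms(2)] assms(1,3) yG nt unfolding Cc_def by auto
qed

lemma hub:
  assumes "(y, Hv) \<in> gE G"
  shows "y = [m0,m0,ds A,m0] \<or> y = [m1,m0,ds A,m0]"
  using edge_cases[OF assms] nt by auto

lemma mu_LV: "mu [c,m0,v,i] = pos i + (if (ds A, v) \<in> (dE A)\<^sup>* then 0 else 2)"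
  unfolding mu_def using nt by simp

lemma mu_Z: "mu [c,m1,m0,m0] = 1"
  unfolding mu_def by simp

lemma mu_P: "mu [c,m1,m1,m0] = Suc (pos m1)"
  unfolding mu_def using nt by simp

lemma reach_g:
  assumes "u = v \<or> (u,v) \<in> dE A" "(ds A, u) \<in> (dE A)\<^sup>*"
  shows "(ds A, v) \<in> (dE A)\<^sup>*"
  using assms(1)
proof
  assume "u = v" then show ?thesis using assms(2) by simp
next
  assume "(u,v) \<in> dE A" then show ?thesis using reach_R assms(2) by blast
qed

lemma mu_lay1:
  assumes "i \<in> dV A" "i \<noteq> m1" "u = v \<or> (u,v) \<in> dE A"
  shows "mu [c,m0,v,dS A i] \<le> mu [c',m0,u,i] + 1"
proof -
  have p: "pos (dS A i) = Suc (pos i)" using pos_S assms by blast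
  show ?thesis
  proof (cases "(ds A, u) \<in> (dE A)\<^sup>*")
    case True
    then have "(ds A, v) \<in> (dE A)\<^sup>*" using reach_g assms(3) by blast
    then show ?thesis using True p unfolding mu_LV by simp
  next
    case False
    then show ?thesis using p unfolding mu_LV by simp
  qed
qed

lemma mu_lay2:
  assumes "i \<in> dV A" "i \<noteq> m1"
  shows "mu [c',m0,u,i] \<le> mu [c,m0,v,dS A i] + 1"
proof -
  have p: "pos (dS A i) = Suc (pos i)" using pos_S assms by blast
  show ?thesis using p unfolding mu_LV by simp
qed

lemma mu_z1: "mu [c,m0,v,m0] \<le> mu [c',m1,m0,m0] + 1"
  unfolding mu_LV mu_Z using pos_m0 by simp

lemma mu_z2: "mu [c',m1,m0,m0] \<le> mu [c,m0,v,m0] + 1"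
  unfolding mu_LV mu_Z using pos_m0 by simp

lemma mu_p1: "mu [c,m0,ds A,m1] \<le> mu [c',m1,m1,m0] + 1"
  unfolding mu_LV mu_P by simp

lemma mu_p2: "mu [c',m1,m1,m0] \<le> mu [c,m0,ds A,m1] + 1"
  unfolding mu_LV mu_P by simp

lemma mu_ok:
  assumes xC: "x \<in> Cc c" and yC: "y \<in> Cc c" and e: "(y,x) \<in> gE G"
  shows "mu x \<le> mu y + 1"
proof -
  have xH: "x \<noteq> Hv" and yH: "y \<noteq> Hv" using xC yC unfolding Cc_def by auto
  note ec = edge_cases[OF e]
  show ?thesis
  proof (cases "\<exists>c u v i. (c = m0 \<or> c = m1) \<and> u \<in> dV A \<and> v \<in> dV A \<and> i \<in> dV A \<and> i \<noteq> m1 \<and> (u = v \<or> (u,v) \<in> dE A) \<and>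
       ((y = [c,m0,u,i] \<and> x = [c,m0,v,dS A i]) \<or> (x = [c,m0,u,i] \<and> y = [c,m0,v,dS A i]))")
    case True
    then obtain c' u v i where h: "i \<in> dV A" "i \<noteq> m1" "u = v \<or> (u,v) \<in> dE A"
      "(y = [c',m0,u,i] \<and> x = [c',m0,v,dS A i]) \<or> (x = [c',m0,u,i] \<and> y = [c',m0,v,dS A i])" by blast
    from h(4) show ?thesis
    proof
      assume "y = [c',m0,u,i] \<and> x = [c',m0,v,dS A i]"
      then show ?thesis using mu_lay1[OF h(1,2,3)] by simp
    next
      assume "x = [c',m0,u,i] \<and> y = [c',m0,v,dS A i]"
      then show ?thesis using mu_lay2[OF h(1,2)] by simp
    qed
  next
    case nl: False
    show ?thesis
    proof (cases "\<exists>c v. (c = m0 \<or> c = m1) \<and> v \<in> dV A \<and> ((y = [c,m1,m0,m0] \<and> x = [c,m0,v,m0]) \<or> (x = [c,m1,m0,m0] \<and> y = [c,m0,v,m0]))")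
      case True
      then obtain c' v where h: "(y = [c',m1,m0,m0] \<and> x = [c',m0,v,m0]) \<or> (x = [c',m1,m0,m0] \<and> y = [c',m0,v,m0])" by blast
      then show ?thesis using mu_z1 mu_z2 by auto
    next
      case nz: False
      show ?thesis
      proof (cases "\<exists>c. (c = m0 \<or> c = m1) \<and> ((y = [c,m1,m1,m0] \<and> x = [c,m0,ds A,m1]) \<or> (x = [c,m1,m1,m0] \<and> y = [c,m0,ds A,m1]))")
        case True
        then obtain c' where h: "(y = [c',m1,m1,m0] \<and> x = [c',m0,ds A,m1]) \<or> (x = [c',m1,m1,m0] \<and> y = [c',m0,ds A,m1])" by blast
        then show ?thesis using mu_p1 mu_p2 by auto
      next
        case False
        then have "\<exists>c. (c = m0 \<or> c = m1) \<and> ((y = Hv \<and> x = [c,m0,ds A,m0]) \<or> (x = Hv \<and> y = [c,m0,ds A,m0]))"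
          using ec nl nz by blast
        then show ?thesis using xH yH by blast
      qed
    qed
  qed
qed

lemma mu_a: "mu [c,m0,ds A,m0] = 0"
  unfolding mu_def using nt pos_m0 by simp

lemma aC: "c = m0 \<or> c = m1 \<Longrightarrow> [c,m0,ds A,m0] \<in> Cc c"
  unfolding Cc_def gV_inV inV_def using sV m0V nt by auto

lemma tC: "c = m0 \<or> c = m1 \<Longrightarrow> [c,m0,dt A,m1] \<in> Cc c"
  unfolding Cc_def gV_inV inV_def using tV m1V nt by auto

lemma pC: "c = m0 \<or> c = m1 \<Longrightarrow> [c,m1,m1,m0] \<in> Cc c"
  unfolding Cc_def gV_inV inV_def using nt by auto

lemma CcV: "Cc c \<subseteq> gV G" unfolding Cc_def by auto

lemma lower:
  assumes c: "c = m0 \<or> c = m1" and rc: "r \<notin> Cc c" and x: "x \<in> Cc c"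
  shows "b.d [c,m0,ds A,m0] + mu x \<le> b.d x"
proof (rule b.lower_bound[where C="Cc c" and a="[c,m0,ds A,m0]" and \<mu>=mu, OF CcV aC[OF c] rc _ _ mu_a x])
  show "\<And>x y. x \<in> Cc c \<Longrightarrow> (y, x) \<in> gE G \<Longrightarrow> y \<notin> Cc c \<Longrightarrow> x = [c,m0,ds A,m0]"
    using cross by blast
  show "\<And>x y. x \<in> Cc c \<Longrightarrow> y \<in> Cc c \<Longrightarrow> (y, x) \<in> gE G \<Longrightarrow> mu x \<le> mu y + 1"
    using mu_ok by blast
qed

lemma entry:
  assumes c: "c = m0 \<or> c = m1" and rc: "r \<notin> Cc c"
  shows "b.d [c,m0,ds A,m0] = Suc (b.d Hv)"
proof -
  have "\<exists>y. y \<notin> Cc c \<and> (y, [c,m0,ds A,m0]) \<in> gE G \<and> b.d [c,m0,ds A,m0] = Suc (b.d y)"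
  proof (rule b.entry_parent[where C="Cc c" and a="[c,m0,ds A,m0]" and \<mu>=mu, OF CcV aC[OF c] rc _ _ mu_a])
    show "\<And>x y. x \<in> Cc c \<Longrightarrow> (y, x) \<in> gE G \<Longrightarrow> y \<notin> Cc c \<Longrightarrow> x = [c,m0,ds A,m0]"
      using cross by blast
    show "\<And>x y. x \<in> Cc c \<Longrightarrow> y \<in> Cc c \<Longrightarrow> (y, x) \<in> gE G \<Longrightarrow> mu x \<le> mu y + 1"
      using mu_ok by blast
  qed
  then obtain y where y: "y \<notin> Cc c" "(y, [c,m0,ds A,m0]) \<in> gE G" "b.d [c,m0,ds A,m0] = Suc (b.d y)" by blast
  have "y = Hv" using cross[OF aC[OF c] y(2) y(1)] by blast
  then show ?thesis using y(3) by simp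
qed

lemma upper:
  assumes c: "c = m0 \<or> c = m1"
  shows "j \<le> pos m1 \<Longrightarrow> k \<le> j \<Longrightarrow> (ds A, v) \<in> dE A ^^ k \<Longrightarrow>
    b.d [c,m0,v,(dS A ^^ j) m0] \<le> b.d [c,m0,ds A,m0] + j"
proof (induction j arbitrary: k v)
  case 0
  then have "v = ds A" by simp
  then show ?case by simp
next
  case (Suc j)
  define i where "i = (dS A ^^ j) m0"
  have i: "i \<in> dV A" "pos i = j" using iter[of j] Suc.prems unfolding i_def by auto
  have im: "i \<noteq> m1" using i(2) Suc.prems by auto
  have vV: "v \<in> dV A" using relpow_V Suc.prems(3) by blast
  have eq: "(dS A ^^ Suc j) m0 = dS A i" unfolding i_def by simp
  show ?case
  proof (cases "k \<le> j")
    case True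
    have IH: "b.d [c,m0,v,i] \<le> b.d [c,m0,ds A,m0] + j" using Suc.IH[OF _ True Suc.prems(3)] Suc.prems(1) unfolding i_def by simp
    have e: "([c,m0,v,i], [c,m0,v,dS A i]) \<in> gE G" using edge_lay(1)[OF c vV vV i(1) im] nt by blast
    have "[c,m0,v,i] \<in> gV G" using e EG by auto
    then have "b.d [c,m0,v,dS A i] \<le> b.d [c,m0,v,i] + 1" using b.d_edge e by blast
    then show ?thesis using IH eq by simp
  next
    case False
    then have k: "k = Suc j" using Suc.prems(2) by simp
    then obtain u where u: "(ds A, u) \<in> dE A ^^ j" "(u, v) \<in> dE A" using Suc.prems(3) by (meson relpow_Suc_E)
    have uV: "u \<in> dV A" using relpow_V u(1) by blast
    have IH: "b.d [c,m0,u,i] \<le> b.d [c,m0,ds A,m0] + j" using Suc.IH[OF _ le_refl u(1)] Suc.prems(1) unfolding i_def by simp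
    have e: "([c,m0,u,i], [c,m0,v,dS A i]) \<in> gE G" using edge_lay(1)[OF c uV vV i(1) im] u(2) nt by blast
    have "[c,m0,u,i] \<in> gV G" using e EG by auto
    then have "b.d [c,m0,v,dS A i] \<le> b.d [c,m0,u,i] + 1" using b.d_edge e by blast
    then show ?thesis using IH eq by simp
  qed
qed

lemma Lasym: "(x,y) \<in> L \<Longrightarrow> (y,x) \<notin> L"
  using b.Ltr b.Lirr by blast

lemma clean:
  assumes c: "c = m0 \<or> c = m1" and rc: "r \<notin> Cc c"
  shows "([c,m0,dt A,m1], [c,m1,m1,m0]) \<in> L \<longleftrightarrow> (ds A, dt A) \<in> (dE A)\<^sup>*"
proof
  assume reach: "(ds A, dt A) \<in> (dE A)\<^sup>*"
  obtain k where k: "k \<le> pos m1" "(ds A, dt A) \<in> dE A ^^ k" using reach_bound[OF reach] by blast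
  have "b.d [c,m0,dt A,m1] \<le> b.d [c,m0,ds A,m0] + pos m1"
    using upper[OF c le_refl k(1) k(2)] iter_m1 by simp
  moreover have "b.d [c,m0,ds A,m0] + mu [c,m1,m1,m0] \<le> b.d [c,m1,m1,m0]" using lower[OF c rc pC[OF c]] .
  moreover have "mu [c,m1,m1,m0] = Suc (pos m1)" unfolding mu_def using nt by simp
  ultimately have "b.d [c,m0,dt A,m1] < b.d [c,m1,m1,m0]" by simp
  then show "([c,m0,dt A,m1], [c,m1,m1,m0]) \<in> L" using b.d_less_L tC[OF c] pC[OF c] CcV by blast
next
  assume inL: "([c,m0,dt A,m1], [c,m1,m1,m0]) \<in> L"
  show "(ds A, dt A) \<in> (dE A)\<^sup>*"
  proof (rule ccontr)
    assume nr: "(ds A, dt A) \<notin> (dE A)\<^sup>*"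
    have "b.d [c,m0,ds A,m1] \<le> b.d [c,m0,ds A,m0] + pos m1"
      using upper[OF c le_refl le0, of "ds A"] iter_m1 by simp
    moreover have "b.d [c,m1,m1,m0] \<le> b.d [c,m0,ds A,m1] + 1"
    proof -
      have e: "([c,m0,ds A,m1], [c,m1,m1,m0]) \<in> gE G" using edge_p(2)[OF c nt] .
      then have "[c,m0,ds A,m1] \<in> gV G" using EG by auto
      then show ?thesis using b.d_edge e by blast
    qed
    moreover have "b.d [c,m0,ds A,m0] + mu [c,m0,dt A,m1] \<le> b.d [c,m0,dt A,m1]" using lower[OF c rc tC[OF c]] .
    moreover have "mu [c,m0,dt A,m1] = pos m1 + 2" unfolding mu_def using nt nr by simp
    ultimately have "b.d [c,m1,m1,m0] < b.d [c,m0,dt A,m1]" by simp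
    then have "([c,m1,m1,m0], [c,m0,dt A,m1]) \<in> L" using b.d_less_L tC[OF c] pC[OF c] CcV by blast
    then show False using Lasym inL by blast
  qed
qed

lemma Phi:
  "(((Hv, [m0,m0,ds A,m0]) \<in> L \<and> ([m0,m0,dt A,m1], [m0,m1,m1,m0]) \<in> L) \<or>
    ((Hv, [m0,m0,ds A,m0]) \<notin> L \<and> Hv \<noteq> [m0,m0,ds A,m0] \<and> ([m1,m0,dt A,m1], [m1,m1,m1,m0]) \<in> L))
   \<longleftrightarrow> (ds A, dt A) \<in> (dE A)\<^sup>*"
proof (cases "r \<in> Cc m0")
  case False
  have "b.d [m0,m0,ds A,m0] = Suc (b.d Hv)" using entry[OF _ False] by simp
  moreover have "Hv \<in> gV G" by (simp add: gV_inV inV_def)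
  moreover have "[m0,m0,ds A,m0] \<in> gV G" using aC[of m0] CcV by blast
  ultimately have "(Hv, [m0,m0,ds A,m0]) \<in> L" using b.d_less_L by simp
  then show ?thesis using clean[OF _ False] by auto
next
  case True
  have r1: "r \<notin> Cc m1" using True nt unfolding Cc_def by auto
  have e1: "b.d [m1,m0,ds A,m0] = Suc (b.d Hv)" using entry[OF _ r1] by simp
  have "Hv \<noteq> r" using True unfolding Cc_def by auto
  moreover have HG: "Hv \<in> gV G" unfolding gV_inV inV_def by auto
  ultimately obtain y where y: "(y, Hv) \<in> gE G" "b.d Hv = Suc (b.d y)" "y \<in> gV G"
    using b.d_parent by metis
  have "y = [m0,m0,ds A,m0]" using hub[OF y(1)] y(2) e1 by auto
  then have "b.d [m0,m0,ds A,m0] < b.d Hv" using y(2) by simp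
  then have "([m0,m0,ds A,m0], Hv) \<in> L" using b.d_less_L HG aC[of m0] CcV by blast
  then have "(Hv, [m0,m0,ds A,m0]) \<notin> L" using Lasym by blast
  moreover have "Hv \<noteq> [m0,m0,ds A,m0]" using nt by simp
  ultimately show ?thesis using clean[OF _ r1] by auto
qed

end



definition gor :: "gfm \<Rightarrow> gfm \<Rightarrow> gfm" where "gor p q = GNot (GAnd (GNot p) (GNot q))"

definition \<phi>0 :: gfm where
  "\<phi>0 = gor (GEq (GConst 0) (GConst 1))
     (gor (GAnd (GLess (GConst 0) (GConst 1)) (GLess (GConst 2) (GConst 3)))
          (GAnd (GNot (GLess (GConst 0) (GConst 1))) (GAnd (GNot (GEq (GConst 0) (GConst 1))) (GLess (GConst 4) (GConst 5)))))"

lemma gsent: "gsentence 6 \<phi>0"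
  unfolding gsentence_def \<phi>0_def gor_def by auto

lemma gmodels_\<phi>0: "gmodels H L \<phi>0 \<longleftrightarrow> (gc H!0 = gc H!1 \<or> ((gc H!0, gc H!1) \<in> L \<and> (gc H!2, gc H!3) \<in> L) \<or>
   ((gc H!0, gc H!1) \<notin> L \<and> gc H!0 \<noteq> gc H!1 \<and> (gc H!4, gc H!5) \<in> L))"
  unfolding gmodels_def \<phi>0_def gor_def by simp

context src
begin

lemma main:
  assumes bft: "is_bft G L"
  shows "gmodels G L \<phi>0 \<longleftrightarrow> (ds A, dt A) \<in> (dE A)\<^sup>*"
proof (cases "m0 = m1")
  case True
  have one: "\<And>v. v \<in> dV A \<Longrightarrow> v = m0"
  proof (rule ccontr)
    fix v assume v: "v \<in> dV A" "v \<noteq> m0"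
    then have "(m0, v) \<in> L0" "(v, m1) \<in> L0" using m0least m1great True by auto
    then have "(m0,m1) \<in> L0" using L0tr[of m0 v m1] by blast
    then have "(m0,m0) \<in> L0" using True by simp
    then show False using L0irr by blast
  qed
  have "ds A = dt A" using one sV tV by metis
  moreover have "gc G!0 = gc G!1" using one[OF sV] True unfolding gc_G by simp
  ultimately show ?thesis unfolding gmodels_\<phi>0 by simp
next
  case nt: False
  have lin: "lin_order (gV G) L" using bft unfolding is_bft_def by blast
  have "[m0,m1,m0,m1] \<in> gV G" by (simp add: gV_inV inV_def)
  then obtain r where r: "r \<in> gV G" "\<forall>x\<in>gV G. x \<noteq> r \<longrightarrow> (r,x) \<in> L"
    using least_exists[OF lin finG] by blast
  interpret an: anal A L r
    by (intro anal.intro anal_axioms.intro src_axioms nt bft r)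
  show ?thesis using an.Phi nt unfolding gmodels_\<phi>0 gc_G by simp
qed

lemma npg: "npgraph 6 G"
  unfolding npgraph_def
proof (intro conjI)
  show "finite (gV G)" by (rule finG)
  show "gE G \<subseteq> gV G \<times> gV G" by (rule EG)
  show "sym (gE G)" by (rule symG)
  show "irrefl (gE G)" using irrG unfolding irrefl_on_def by blast
  show "length (gc G) = 6" unfolding gc_G by simp
  show "set (gc G) \<subseteq> gV G" unfolding gc_G using sV tV m0V m1V by (auto simp: gV_inV inV_def)
qed

end

definition Gs :: "nat list pgraph set" where
  "Gs = {H. npgraph 6 H \<and> (\<forall>L L'. is_bft H L \<longrightarrow> is_bft H L' \<longrightarrow> (gmodels H L \<phi>0 \<longleftrightarrow> gmodels H L' \<phi>0))}"

lemma inv_Gs: "bft_invariant Gs \<phi>0"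
  unfolding bft_invariant_def
proof (intro allI impI)
  fix G L H L'
  assume h: "G \<in> Gs \<and> is_bft G L \<and> H \<in> Gs \<and> is_bft H L' \<and> pg_iso G H"
  obtain f where f: "bij_betw f (gV G) (gV H)" "\<forall>x\<in>gV G. \<forall>y\<in>gV G. (x, y) \<in> gE G \<longleftrightarrow> (f x, f y) \<in> gE H"
    "gc H = map f (gc G)" using h unfolding pg_iso_def by blast
  have npG: "npgraph 6 G" and npH: "npgraph 6 H" using h unfolding Gs_def by auto
  have EG': "gE G \<subseteq> gV G \<times> gV G" and EH': "gE H \<subseteq> gV H \<times> gV H" using npG npH unfolding npgraph_def by auto
  define L'' where "L'' = (\<lambda>(x,y). (f x, f y)) ` L"
  have bH: "is_bft H L''" unfolding L''_def using iso_bft[OF f(1) f(2) EG' EH'] h by blast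
  have inj: "inj_on f (gV G)" using f(1) bij_betw_def by blast
  have LV: "L \<subseteq> gV G \<times> gV G" using h lin_orderD(1) unfolding is_bft_def by blast
  have key: "\<And>a b. a \<in> gV G \<Longrightarrow> b \<in> gV G \<Longrightarrow> (f a, f b) \<in> L'' \<longleftrightarrow> (a,b) \<in> L"
  proof
    fix a b assume ab: "a \<in> gV G" "b \<in> gV G" "(f a, f b) \<in> L''"
    then obtain p q where pq: "(p,q) \<in> L" "f a = f p" "f b = f q" unfolding L''_def by auto
    have "p \<in> gV G" "q \<in> gV G" using pq(1) LV by auto
    then have "p = a" "q = b" using inj pq ab unfolding inj_on_def by auto
    then show "(a,b) \<in> L" using pq by simp
  qed (auto simp: L''_def)
  have len: "length (gc G) = 6" and cV: "set (gc G) \<subseteq> gV G" using npG unfolding npgraph_def by auto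
  have ci: "\<And>i. i < 6 \<Longrightarrow> gc G ! i \<in> gV G" using len cV nth_mem by (metis subsetD)
  have hi: "\<And>i. i < 6 \<Longrightarrow> gc H ! i = f (gc G ! i)" using f(3) len by simp
  have eqi: "\<And>i j. i < 6 \<Longrightarrow> j < 6 \<Longrightarrow> (gc H ! i = gc H ! j) \<longleftrightarrow> (gc G ! i = gc G ! j)"
    using hi ci inj unfolding inj_on_def by metis
  have Li: "\<And>i j. i < 6 \<Longrightarrow> j < 6 \<Longrightarrow> ((gc H ! i, gc H ! j) \<in> L'') \<longleftrightarrow> ((gc G ! i, gc G ! j) \<in> L)"
    using hi ci key by simp
  have "gmodels H L'' \<phi>0 \<longleftrightarrow> gmodels G L \<phi>0"
    unfolding gmodels_\<phi>0 using eqi[of 0 1] Li[of 0 1] Li[of 2 3] Li[of 4 5] by simp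
  moreover have "gmodels H L'' \<phi>0 \<longleftrightarrow> gmodels H L' \<phi>0" using h bH unfolding Gs_def by blast
  ultimately show "gmodels G L \<phi>0 \<longleftrightarrow> gmodels H L' \<phi>0" by simp
qed

lemma basic: "basic_bft_definable D2S reach_query"
  unfolding basic_bft_definable_def
proof (intro conjI exI[of _ 6] exI[of _ Gs] exI[of _ \<phi>0] exI[of _ \<pi>0])
  show "reach_query \<subseteq> D2S" unfolding reach_query_def by blast
  show "Gs \<subseteq> {G. npgraph 6 G}" unfolding Gs_def by blast
  show "gsentence 6 \<phi>0" by (rule gsent)
  show "wf_interp 6 \<pi>0" by (rule wf_\<pi>0)
  show "bft_invariant Gs \<phi>0" by (rule inv_Gs)
  show "\<forall>A\<in>D2S. interp_struct \<pi>0 A \<in> Gs"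
  proof
    fix A assume "A \<in> D2S"
    then interpret s: src A by (rule src.intro)
    have "npgraph 6 s.G" by (rule s.npg)
    moreover have "\<forall>L L'. is_bft s.G L \<longrightarrow> is_bft s.G L' \<longrightarrow> (gmodels s.G L \<phi>0 \<longleftrightarrow> gmodels s.G L' \<phi>0)"
      using s.main by blast
    ultimately show "interp_struct \<pi>0 A \<in> Gs" unfolding Gs_def s.G_def by blast
  qed
  show "\<forall>A\<in>D2S. A \<in> reach_query \<longleftrightarrow> bft_models (interp_struct \<pi>0 A) \<phi>0"
  proof
    fix A assume AD: "A \<in> D2S"
    then interpret s: src A by (rule src.intro)
    obtain L where L: "is_bft s.G L" using bft_exists[OF s.finG s.EG] by blast
    have "bft_models s.G \<phi>0 \<longleftrightarrow> (ds A, dt A) \<in> (dE A)\<^sup>*"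
      unfolding bft_models_def using s.main L by blast
    then show "A \<in> reach_query \<longleftrightarrow> bft_models (interp_struct \<pi>0 A) \<phi>0"
      unfolding reach_query_def s.G_def using AD by blast
  qed
qed

theorem corollary1:
  shows "bft_definable D2S reach_query"
  by (rule bft_definable.basic[OF basic])


end
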